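(* There exists a fully polynomial-time approximation scheme (FPTAS) for PKP whose algorithm for accuracy $\varepsilon$ has running time $\mathcal{O}\!\left(\frac{n^4}{\varepsilon}\log(p_{\max})\right)$, where $p_{\max}=\max_{j\in N}|p_j|$.
   Context: The Product Knapsack Problem (PKP): an instance consists of items $j\in N=\{1,\dots,n\}$ with integer weights $w_j$ and integer profits $p_j$, and a positive integer capacity $C$; the task is to find $S\subseteq N$ with $\sum_{j\in S}w_j\le C$ maximizing $\prod_{j\in S}p_j$, where the empty set has objective value $0$. Let $z^*$ denote the optimal value. Throughout, instances are assumed to satisfy: (a) $w_j\le C$ for all $j$; (b) $p_j\neq 0$ for all $j$; (c) for each $j$ with $p_j<0$ there is $j'\neq j$ with $p_{j'}<0$ and $w_j+w_{j'}\le C$; (d) $w_j\ge 0$ for all $j$; (e) $p_j<0$ whenever $w_j=0$. For $0<\alpha\le 1$, an $\alpha$-approximation algorithm computes in polynomial time a feasible $S$ with $\prod_{j\in S}p_j\ge \alpha z^*$. An FPTAS is a family $(A_\varepsilon)_{\varepsilon>0}$ where each $A_\varepsilon$ is a $(1-\varepsilon)$-approximation algorithm with running time polynomial in the input size and in $1/\varepsilon$. *)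

theory Defs
  imports Complex_Main
begin

definition feasible :: "int list \<Rightarrow> int \<Rightarrow> nat set \<Rightarrow> bool" where
  "feasible ws C S \<longleftrightarrow> S \<subseteq> {..<length ws} \<and> (\<Sum>j\<in>S. ws ! j) \<le> C"

definition obj :: "int list \<Rightarrow> nat set \<Rightarrow> real" where
  "obj ps S = (if S = {} then 0 else (\<Prod>j\<in>S. real_of_int (ps ! j)))"

definition opt :: "int list \<Rightarrow> int list \<Rightarrow> int \<Rightarrow> real" where
  "opt ws ps C = Max {obj ps S | S. feasible ws C S}"

definition pmax :: "int list \<Rightarrow> int" where
  "pmax ps = Max (insert 1 (abs ` set ps))"

definition pkp_instance :: "int list \<Rightarrow> int list \<Rightarrow> int \<Rightarrow> bool" where
  "pkp_instance ws ps C \<longleftrightarrow>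
     length ws = length ps \<and> length ws \<ge> 1 \<and> C > 0 \<and>
     (\<forall>j<length ws. ws ! j \<le> C) \<and>                                  \<comment> \<open>(a)\<close>
     (\<forall>j<length ws. ps ! j \<noteq> 0) \<and>                                 \<comment> \<open>(b)\<close>
     (\<forall>j<length ws. ps ! j < 0 \<longrightarrow>
        (\<exists>j'<length ws. j' \<noteq> j \<and> ps ! j' < 0 \<and> ws ! j + ws ! j' \<le> C)) \<and> \<comment> \<open>(c)\<close>
     (\<forall>j<length ws. ws ! j \<ge> 0) \<and>                                  \<comment> \<open>(d)\<close>
     (\<forall>j<length ws. ws ! j = 0 \<longrightarrow> ps ! j < 0)                        \<comment> \<open>(e)\<close>"

text \<open>Memory is a map from integer addresses to integers; instructions name addresses.
  Every executed instruction costs one time unit.\<close>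

datatype instr =
    SetC int int
  | Add int int int
  | Sub int int int
  | Mul int int int
  | Div int int int         \<comment> \<open>m[a] := m[b] div m[d]  (floor division, x div 0 = 0)\<close>
  | LoadI int int
  | StoreI int int
  | JPos int nat
  | Jmp nat
  | Halt

type_synonym state = "nat \<times> (int \<Rightarrow> int)"

fun exec :: "instr \<Rightarrow> state \<Rightarrow> state" where
  "exec (SetC a c) (pc, m) = (Suc pc, m(a := c))"
| "exec (Add a b d) (pc, m) = (Suc pc, m(a := m b + m d))"
| "exec (Sub a b d) (pc, m) = (Suc pc, m(a := m b - m d))"
| "exec (Mul a b d) (pc, m) = (Suc pc, m(a := m b * m d))"
| "exec (Div a b d) (pc, m) = (Suc pc, m(a := m b div m d))"
| "exec (LoadI a b) (pc, m) = (Suc pc, m(a := m (m b)))"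
| "exec (StoreI a b) (pc, m) = (Suc pc, m(m a := m b))"
| "exec (JPos a l) (pc, m) = (if m a > 0 then l else Suc pc, m)"
| "exec (Jmp l) (pc, m) = (l, m)"
| "exec Halt (pc, m) = (pc, m)"

definition halted :: "instr list \<Rightarrow> state \<Rightarrow> bool" where
  "halted P s \<longleftrightarrow> fst s \<ge> length P \<or> P ! fst s = Halt"

definition step :: "instr list \<Rightarrow> state \<Rightarrow> state" where
  "step P s = (if halted P s then s else exec (P ! fst s) s)"

definition run :: "instr list \<Rightarrow> nat \<Rightarrow> state \<Rightarrow> state" where
  "run P t s = (step P ^^ t) s"

text \<open>Input encoding: m[0] = n, m[1] = C, m[2+2j] = w_j, m[3+2j] = p_j (j < n), 0 elsewhere;
  execution starts at instruction 0.\<close>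

definition init :: "int list \<Rightarrow> int list \<Rightarrow> int \<Rightarrow> state" where
  "init ws ps C = (0, \<lambda>a. if a = 0 then int (length ws) else if a = 1 then C
      else if 2 \<le> a \<and> a < 2 + 2 * int (length ws) then
        (if even a then ws ! nat ((a - 2) div 2) else ps ! nat ((a - 2) div 2))
      else 0)"

definition ram_output :: "nat \<Rightarrow> state \<Rightarrow> nat set" where
  "ram_output n s = {j. j < n \<and> snd s (int j) \<noteq> 0}"

text \<open>Word-size restriction (trans-dichotomous word RAM): during the first t steps all
  memory contents are bounded in absolute value by a fixed polynomial in the numbers
  occurring in the input and 1/eps.\<close>

definition word_bounded :: "nat \<Rightarrow> real \<Rightarrow> int list \<Rightarrow> int list \<Rightarrow> int \<Rightarrow> instr list \<Rightarrow> nat \<Rightarrow> bool" where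
  "word_bounded K eps ws ps C P t \<longleftrightarrow>
     (\<forall>t'\<le>t. \<forall>a. \<bar>snd (run P t' (init ws ps C)) a\<bar>
        \<le> (2 + int (length ws) + C + pmax ps + \<lceil>1 / eps\<rceil>) ^ K)"

definition approx_alg_within ::
  "nat \<Rightarrow> real \<Rightarrow> (int list \<Rightarrow> int list \<Rightarrow> int \<Rightarrow> real) \<Rightarrow> instr list \<Rightarrow> bool" where
  "approx_alg_within K eps T P \<longleftrightarrow>
     (\<forall>ws ps C. pkp_instance ws ps C \<longrightarrow>
        (\<exists>t. real t \<le> T ws ps C \<and>
             halted P (run P t (init ws ps C)) \<and>
             word_bounded K eps ws ps C P t \<and>
             (let S = ram_output (length ws) (run P t (init ws ps C)) in
                feasible ws C S \<and> obj ps S \<ge> (1 - eps) * opt ws ps C)))"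

end

theory Submission
  imports Defs
begin


definition bnd :: "int \<Rightarrow> (int \<Rightarrow> int) \<Rightarrow> bool" where
  "bnd B m \<longleftrightarrow> (\<forall>a. \<bar>m a\<bar> \<le> B)"

definition reach :: "instr list \<Rightarrow> int \<Rightarrow> state \<Rightarrow> nat \<Rightarrow> state \<Rightarrow> bool" where
  "reach P B s T s' \<longleftrightarrow> (\<exists>t\<le>T. run P t s = s' \<and> (\<forall>t'\<le>t. bnd B (snd (run P t' s))))"

lemma run_0[simp]: "run P 0 s = s" by (simp add: run_def)
lemma run_Suc: "run P (Suc t) s = run P t (step P s)"
  unfolding run_def by (metis comp_apply funpow_Suc_right)
lemma run_add: "run P (a + b) s = run P b (run P a s)"
  unfolding run_def by (metis add.commute comp_apply funpow_add)

lemma reach_refl: "bnd B (snd s) \<Longrightarrow> reach P B s T s"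
  unfolding reach_def by (rule exI[of _ 0]) auto

lemma reach_stepI: "bnd B (snd s) \<Longrightarrow> reach P B (step P s) T s' \<Longrightarrow> reach P B s (Suc T) s'"
  unfolding reach_def
proof (elim exE conjE)
  fix t assume b: "bnd B (snd s)" and t: "t \<le> T" "run P t (step P s) = s'"
     "\<forall>t'\<le>t. bnd B (snd (run P t' (step P s)))"
  show "\<exists>t\<le>Suc T. run P t s = s' \<and> (\<forall>t'\<le>t. bnd B (snd (run P t' s)))"
  proof (rule exI[of _ "Suc t"], intro conjI allI impI)
    show "Suc t \<le> Suc T" using t by simp
    show "run P (Suc t) s = s'" using t by (simp add: run_Suc)
    fix t' assume "t' \<le> Suc t"
    then show "bnd B (snd (run P t' s))"
      using b t by (cases t') (auto simp: run_Suc)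
  qed
qed

lemma reach_trans: "reach P B s T1 s1 \<Longrightarrow> reach P B s1 T2 s2 \<Longrightarrow> reach P B s (T1 + T2) s2"
  unfolding reach_def
proof (elim exE conjE)
  fix t1 t2 assume a: "t1 \<le> T1" "run P t1 s = s1" "\<forall>t'\<le>t1. bnd B (snd (run P t' s))"
    and b: "t2 \<le> T2" "run P t2 s1 = s2" "\<forall>t'\<le>t2. bnd B (snd (run P t' s1))"
  show "\<exists>t\<le>T1 + T2. run P t s = s2 \<and> (\<forall>t'\<le>t. bnd B (snd (run P t' s)))"
  proof (rule exI[of _ "t1 + t2"], intro conjI allI impI)
    show "t1 + t2 \<le> T1 + T2" using a b by simp
    show "run P (t1 + t2) s = s2" using a b by (simp add: run_add)
    fix t' assume t': "t' \<le> t1 + t2"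
    show "bnd B (snd (run P t' s))"
    proof (cases "t' \<le> t1")
      case True then show ?thesis using a by simp
    next
      case False
      define d where "d = t' - t1"
      then have d: "t' = t1 + d" "d \<le> t2" using t' False by auto
      show ?thesis using b a d by (simp add: run_add)
    qed
  qed
qed

lemma reach_mono: "reach P B s T s' \<Longrightarrow> T \<le> T' \<Longrightarrow> reach P B s T' s'"
  unfolding reach_def using le_trans by blast

lemma bnd_upd: "bnd B m \<Longrightarrow> bnd B (m(a := x)) = (\<bar>x\<bar> \<le> B)"
  unfolding bnd_def by (metis fun_upd_same fun_upd_apply)

definition prog :: "int \<Rightarrow> instr list" where
  "prog M = [
    SetC (-1) 1,
    SetC (-15) 2,
    SetC (-16) 3,
    Add (-2) 0 (-30),
    Add (-3) 1 (-1),
    SetC (-12) M,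
    Mul (-4) (-2) (-12),
    Add (-13) (-4) (-4),
    Add (-4) (-13) (-4),
    Mul (-5) (-4) (-4),
    Add (-6) (-4) (-1),
    Add (-7) (-2) (-1),
    Add (-10) (-2) (-2),
    Add (-10) (-10) (-15),
    Add (-11) (-10) (-2),
    Sub (-12) (-2) (-8),
    JPos (-12) 18,
    Jmp 44,
    Add (-13) (-8) (-8),
    Add (-13) (-13) (-16),
    LoadI (-17) (-13),
    JPos (-17) 25,
    SetC (-19) 1,
    Sub (-17) (-30) (-17),
    Jmp 26,
    SetC (-19) 0,
    Mul (-20) (-17) (-5),
    SetC (-21) 0,
    Add (-22) (-5) (-30),
    Mul (-23) (-22) (-6),
    Div (-23) (-23) (-4),
    Sub (-24) (-23) (-20),
    JPos (-24) 36,
    Add (-22) (-23) (-30),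
    Add (-21) (-21) (-1),
    Jmp 29,
    Add (-21) (-21) (-1),
    Mul (-21) (-21) (-7),
    Add (-21) (-21) (-19),
    Add (-24) (-10) (-8),
    StoreI (-24) (-21),
    Add (-9) (-9) (-21),
    Add (-8) (-8) (-1),
    Jmp 15,
    Add (-9) (-9) (-1),
    SetC (-8) 1,
    Sub (-12) (-9) (-8),
    JPos (-12) 49,
    Jmp 53,
    Add (-13) (-11) (-8),
    StoreI (-13) (-3),
    Add (-8) (-8) (-1),
    Jmp 46,
    SetC (-8) 1,
    Add (-25) (-11) (-30),
    Sub (-12) (-7) (-8),
    JPos (-12) 58,
    Jmp 87,
    Add (-13) (-10) (-8),
    Sub (-13) (-13) (-1),
    LoadI (-26) (-13),
    Add (-13) (-8) (-8),
    LoadI (-27) (-13),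
    SetC (-28) 0,
    Sub (-12) (-9) (-28),
    JPos (-12) 69,
    Add (-25) (-25) (-9),
    Add (-8) (-8) (-1),
    Jmp 55,
    Add (-13) (-25) (-28),
    LoadI (-14) (-13),
    Sub (-12) (-28) (-26),
    Add (-12) (-12) (-1),
    JPos (-12) 75,
    Jmp 82,
    Sub (-13) (-13) (-26),
    LoadI (-29) (-13),
    Add (-29) (-29) (-27),
    Sub (-12) (-14) (-29),
    JPos (-12) 81,
    Jmp 82,
    Add (-14) (-29) (-30),
    Add (-13) (-25) (-9),
    Add (-13) (-13) (-28),
    StoreI (-13) (-14),
    Add (-28) (-28) (-1),
    Jmp 64,
    Sub (-28) (-9) (-1),
    Add (-13) (-25) (-28),
    LoadI (-14) (-13),
    Sub (-12) (-3) (-14),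
    JPos (-12) 93,
    Jmp 101,
    Div (-12) (-28) (-7),
    Mul (-12) (-12) (-7),
    Sub (-12) (-28) (-12),
    Div (-13) (-12) (-15),
    Mul (-13) (-13) (-15),
    Sub (-13) (-12) (-13),
    JPos (-13) 101,
    Jmp 103,
    Sub (-28) (-28) (-1),
    Jmp 88,
    Add (-8) (-2) (-30),
    JPos (-8) 106,
    Jmp 121,
    Add (-13) (-25) (-28),
    LoadI (-14) (-13),
    Sub (-25) (-25) (-9),
    Add (-13) (-25) (-28),
    LoadI (-29) (-13),
    Sub (-12) (-29) (-14),
    Sub (-8) (-8) (-1),
    JPos (-12) 116,
    StoreI (-8) (-30),
    Jmp 104,
    StoreI (-8) (-1),
    Add (-13) (-10) (-8),
    LoadI (-13) (-13),
    Sub (-28) (-28) (-13),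
    Jmp 104,
    Halt]"


lemma len_prog[simp]: "length (prog M) = 122" by (simp add: prog_def)

lemma step_at: "prog M ! pc = i \<Longrightarrow> i \<noteq> Halt \<Longrightarrow> pc < 122 \<Longrightarrow> step (prog M) (pc, m) = exec i (pc, m)"
  unfolding step_def halted_def by simp

lemma prog_nth:
  "prog M ! 0 = SetC (-1) 1"
  "prog M ! 1 = SetC (-15) 2"
  "prog M ! Suc 0 = SetC (-15) 2"
  "prog M ! 2 = SetC (-16) 3"
  "prog M ! 3 = Add (-2) 0 (-30)"
  "prog M ! 4 = Add (-3) 1 (-1)"
  "prog M ! 5 = SetC (-12) M"
  "prog M ! 6 = Mul (-4) (-2) (-12)"
  "prog M ! 7 = Add (-13) (-4) (-4)"
  "prog M ! 8 = Add (-4) (-13) (-4)"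
  "prog M ! 9 = Mul (-5) (-4) (-4)"
  "prog M ! 10 = Add (-6) (-4) (-1)"
  "prog M ! 11 = Add (-7) (-2) (-1)"
  "prog M ! 12 = Add (-10) (-2) (-2)"
  "prog M ! 13 = Add (-10) (-10) (-15)"
  "prog M ! 14 = Add (-11) (-10) (-2)"
  "prog M ! 15 = Sub (-12) (-2) (-8)"
  "prog M ! 16 = JPos (-12) 18"
  "prog M ! 17 = Jmp 44"
  "prog M ! 18 = Add (-13) (-8) (-8)"
  "prog M ! 19 = Add (-13) (-13) (-16)"
  "prog M ! 20 = LoadI (-17) (-13)"
  "prog M ! 21 = JPos (-17) 25"
  "prog M ! 22 = SetC (-19) 1"
  "prog M ! 23 = Sub (-17) (-30) (-17)"
  "prog M ! 24 = Jmp 26"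
  "prog M ! 25 = SetC (-19) 0"
  "prog M ! 26 = Mul (-20) (-17) (-5)"
  "prog M ! 27 = SetC (-21) 0"
  "prog M ! 28 = Add (-22) (-5) (-30)"
  "prog M ! 29 = Mul (-23) (-22) (-6)"
  "prog M ! 30 = Div (-23) (-23) (-4)"
  "prog M ! 31 = Sub (-24) (-23) (-20)"
  "prog M ! 32 = JPos (-24) 36"
  "prog M ! 33 = Add (-22) (-23) (-30)"
  "prog M ! 34 = Add (-21) (-21) (-1)"
  "prog M ! 35 = Jmp 29"
  "prog M ! 36 = Add (-21) (-21) (-1)"
  "prog M ! 37 = Mul (-21) (-21) (-7)"
  "prog M ! 38 = Add (-21) (-21) (-19)"
  "prog M ! 39 = Add (-24) (-10) (-8)"
  "prog M ! 40 = StoreI (-24) (-21)"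
  "prog M ! 41 = Add (-9) (-9) (-21)"
  "prog M ! 42 = Add (-8) (-8) (-1)"
  "prog M ! 43 = Jmp 15"
  "prog M ! 44 = Add (-9) (-9) (-1)"
  "prog M ! 45 = SetC (-8) 1"
  "prog M ! 46 = Sub (-12) (-9) (-8)"
  "prog M ! 47 = JPos (-12) 49"
  "prog M ! 48 = Jmp 53"
  "prog M ! 49 = Add (-13) (-11) (-8)"
  "prog M ! 50 = StoreI (-13) (-3)"
  "prog M ! 51 = Add (-8) (-8) (-1)"
  "prog M ! 52 = Jmp 46"
  "prog M ! 53 = SetC (-8) 1"
  "prog M ! 54 = Add (-25) (-11) (-30)"
  "prog M ! 55 = Sub (-12) (-7) (-8)"
  "prog M ! 56 = JPos (-12) 58"
  "prog M ! 57 = Jmp 87"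
  "prog M ! 58 = Add (-13) (-10) (-8)"
  "prog M ! 59 = Sub (-13) (-13) (-1)"
  "prog M ! 60 = LoadI (-26) (-13)"
  "prog M ! 61 = Add (-13) (-8) (-8)"
  "prog M ! 62 = LoadI (-27) (-13)"
  "prog M ! 63 = SetC (-28) 0"
  "prog M ! 64 = Sub (-12) (-9) (-28)"
  "prog M ! 65 = JPos (-12) 69"
  "prog M ! 66 = Add (-25) (-25) (-9)"
  "prog M ! 67 = Add (-8) (-8) (-1)"
  "prog M ! 68 = Jmp 55"
  "prog M ! 69 = Add (-13) (-25) (-28)"
  "prog M ! 70 = LoadI (-14) (-13)"
  "prog M ! 71 = Sub (-12) (-28) (-26)"
  "prog M ! 72 = Add (-12) (-12) (-1)"
  "prog M ! 73 = JPos (-12) 75"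
  "prog M ! 74 = Jmp 82"
  "prog M ! 75 = Sub (-13) (-13) (-26)"
  "prog M ! 76 = LoadI (-29) (-13)"
  "prog M ! 77 = Add (-29) (-29) (-27)"
  "prog M ! 78 = Sub (-12) (-14) (-29)"
  "prog M ! 79 = JPos (-12) 81"
  "prog M ! 80 = Jmp 82"
  "prog M ! 81 = Add (-14) (-29) (-30)"
  "prog M ! 82 = Add (-13) (-25) (-9)"
  "prog M ! 83 = Add (-13) (-13) (-28)"
  "prog M ! 84 = StoreI (-13) (-14)"
  "prog M ! 85 = Add (-28) (-28) (-1)"
  "prog M ! 86 = Jmp 64"
  "prog M ! 87 = Sub (-28) (-9) (-1)"
  "prog M ! 88 = Add (-13) (-25) (-28)"
  "prog M ! 89 = LoadI (-14) (-13)"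
  "prog M ! 90 = Sub (-12) (-3) (-14)"
  "prog M ! 91 = JPos (-12) 93"
  "prog M ! 92 = Jmp 101"
  "prog M ! 93 = Div (-12) (-28) (-7)"
  "prog M ! 94 = Mul (-12) (-12) (-7)"
  "prog M ! 95 = Sub (-12) (-28) (-12)"
  "prog M ! 96 = Div (-13) (-12) (-15)"
  "prog M ! 97 = Mul (-13) (-13) (-15)"
  "prog M ! 98 = Sub (-13) (-12) (-13)"
  "prog M ! 99 = JPos (-13) 101"
  "prog M ! 100 = Jmp 103"
  "prog M ! 101 = Sub (-28) (-28) (-1)"
  "prog M ! 102 = Jmp 88"
  "prog M ! 103 = Add (-8) (-2) (-30)"
  "prog M ! 104 = JPos (-8) 106"
  "prog M ! 105 = Jmp 121"
  "prog M ! 106 = Add (-13) (-25) (-28)"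
  "prog M ! 107 = LoadI (-14) (-13)"
  "prog M ! 108 = Sub (-25) (-25) (-9)"
  "prog M ! 109 = Add (-13) (-25) (-28)"
  "prog M ! 110 = LoadI (-29) (-13)"
  "prog M ! 111 = Sub (-12) (-29) (-14)"
  "prog M ! 112 = Sub (-8) (-8) (-1)"
  "prog M ! 113 = JPos (-12) 116"
  "prog M ! 114 = StoreI (-8) (-30)"
  "prog M ! 115 = Jmp 104"
  "prog M ! 116 = StoreI (-8) (-1)"
  "prog M ! 117 = Add (-13) (-10) (-8)"
  "prog M ! 118 = LoadI (-13) (-13)"
  "prog M ! 119 = Sub (-28) (-28) (-13)"
  "prog M ! 120 = Jmp 104"
  "prog M ! 121 = Halt"
  by (simp_all add: prog_def)


definition ht :: "int \<Rightarrow> int \<Rightarrow> nat \<Rightarrow> (int \<Rightarrow> int) \<Rightarrow> nat \<Rightarrow> nat \<Rightarrow> ((int \<Rightarrow> int) \<Rightarrow> bool) \<Rightarrow> bool" where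
  "ht M B pc m T pc' Q \<longleftrightarrow> (\<exists>m'. reach (prog M) B (pc, m) T (pc', m') \<and> Q m')"

lemma ht_step:
  assumes "prog M ! pc = i" "i \<noteq> Halt" "pc < 122" "bnd B m" "0 < T"
    "ht M B (fst (exec i (pc, m))) (snd (exec i (pc, m))) (T - 1) pc' Q"
  shows "ht M B pc m T pc' Q"
proof -
  obtain m' where r: "reach (prog M) B (exec i (pc, m)) (T - 1) (pc', m')" "Q m'"
    using assms(6) unfolding ht_def by auto
  have "step (prog M) (pc, m) = exec i (pc, m)" using step_at assms by blast
  then have "reach (prog M) B (pc, m) (Suc (T - 1)) (pc', m')"
    using reach_stepI[of B "(pc, m)" "prog M" "T - 1" "(pc', m')"] r assms(4) by simp
  then show ?thesis unfolding ht_def using r assms(5) by auto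
qed

lemma ht_done: "bnd B m \<Longrightarrow> Q m \<Longrightarrow> ht M B pc m T pc Q"
  unfolding ht_def using reach_refl[of B "(pc, m)"] by auto

lemma ht_trans: "ht M B pc m T1 pc1 Q1 \<Longrightarrow> (\<And>m1. Q1 m1 \<Longrightarrow> ht M B pc1 m1 T2 pc2 Q2)
  \<Longrightarrow> ht M B pc m (T1 + T2) pc2 Q2"
  unfolding ht_def using reach_trans by blast

lemma ht_mono: "ht M B pc m T pc' Q \<Longrightarrow> T \<le> T' \<Longrightarrow> (\<And>m'. Q m' \<Longrightarrow> Q' m') \<Longrightarrow> ht M B pc m T' pc' Q'"
  unfolding ht_def using reach_mono by blast

lemma ht_loop:
  assumes body: "\<And>k m. k < N \<Longrightarrow> I k m \<Longrightarrow> ht M B h m (c k) h (I (Suc k))"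
  shows "I k0 m \<Longrightarrow> k0 \<le> N \<Longrightarrow> (\<And>m. I N m \<Longrightarrow> bnd B m) \<Longrightarrow> ht M B h m (\<Sum>k\<in>{k0..<N}. c k) h (I N)"
proof (induction "N - k0" arbitrary: k0 m)
  case 0
  then have "k0 = N" by simp
  then show ?case using 0 ht_done by simp
next
  case (Suc x)
  then have k0: "k0 < N" by simp
  have s: "(\<Sum>k\<in>{k0..<N}. c k) = c k0 + (\<Sum>k\<in>{Suc k0..<N}. c k)"
    using k0 by (simp add: sum.atLeast_Suc_lessThan)
  show ?case unfolding s
    apply (rule ht_trans[OF body[OF k0 Suc.prems(1)]])
    apply (rule Suc.hyps(1))
    using Suc k0 by auto
qed

definition inb :: "int \<Rightarrow> int \<Rightarrow> bool" where "inb B x \<longleftrightarrow> \<bar>x\<bar> \<le> B"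
lemma bnd_upd': "bnd B m \<Longrightarrow> bnd B (m(a := x)) = inb B x"
  unfolding inb_def by (rule bnd_upd)
lemmas bnd_simps = bnd_upd'

lemma exec_simps':
  "exec (SetC a c) (pc, m) = (pc + 1, m(a := c))"
  "exec (Add a b d) (pc, m) = (pc + 1, m(a := m b + m d))"
  "exec (Sub a b d) (pc, m) = (pc + 1, m(a := m b - m d))"
  "exec (Mul a b d) (pc, m) = (pc + 1, m(a := m b * m d))"
  "exec (Div a b d) (pc, m) = (pc + 1, m(a := m b div m d))"
  "exec (LoadI a b) (pc, m) = (pc + 1, m(a := m (m b)))"
  "exec (StoreI a b) (pc, m) = (pc + 1, m(m a := m b))"
  "exec (JPos a l) (pc, m) = (if m a > 0 then l else pc + 1, m)"
  "exec (Jmp l) (pc, m) = (l, m)"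
  by auto
lemma Suc0_1: "Suc 0 = 1" by simp
lemma Suc1_2: "Suc 1 = 2" by simp
lemmas pcnorm = Suc0_1 Suc1_2 Suc_numeral add_num_simps



locale pkp =
  fixes ws ps :: "int list" and C M :: int
  assumes inst: "pkp_instance ws ps C" and M1: "1 \<le> M"
begin

abbreviation "n \<equiv> length ws"
definition "nI = int n"
definition "mm = 3 * nI * M"
definition "RR = mm * mm"

fun ysq :: "nat \<Rightarrow> int" where
  "ysq 0 = RR" | "ysq (Suc k) = ysq k * (mm + 1) div mm"

definition vf :: "int \<Rightarrow> nat" where "vf p = (LEAST k. \<bar>p\<bar> * RR < ysq (Suc k))"
definition neg :: "nat \<Rightarrow> int" where "neg j = (if ps ! j < 0 then 1 else 0)"
definition dd :: "nat \<Rightarrow> int" where "dd j = (nI + 1) * (int (vf (ps ! j)) + 1) + neg j"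
definition "Kmax = (\<Sum>j<n. dd j)"
definition "L = Kmax + 1"

fun Wf :: "nat \<Rightarrow> int \<Rightarrow> int" where
  "Wf 0 K = (if K = 0 then 0 else C + 1)"
| "Wf (Suc j) K = (if dd j \<le> K then min (Wf j K) (Wf j (K - dd j) + ws ! j) else Wf j K)"

definition good :: "int \<Rightarrow> bool" where "good K \<longleftrightarrow> Wf n K \<le> C \<and> even (K mod (nI + 1))"
definition "Kb = Max {K \<in> {0..Kmax}. good K}"

fun BT :: "nat \<Rightarrow> int \<Rightarrow> nat set" where
  "BT 0 K = {}"
| "BT (Suc j) K = (if Wf (Suc j) K < Wf j K then insert j (BT j (K - dd j)) else BT j K)"

definition "Sel = BT n Kb"

definition key :: "nat set \<Rightarrow> int" where "key S = (\<Sum>j\<in>S. dd j)"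
definition wt :: "nat set \<Rightarrow> int" where "wt S = (\<Sum>j\<in>S. ws ! j)"

lemma n_pos: "1 \<le> n" and lens: "length ps = n" and Cpos: "0 < C"
  and w_le: "\<And>j. j < n \<Longrightarrow> ws ! j \<le> C" and p_nz: "\<And>j. j < n \<Longrightarrow> ps ! j \<noteq> 0"
  and w_nn: "\<And>j. j < n \<Longrightarrow> 0 \<le> ws ! j"
  and negpair: "\<And>j. j < n \<Longrightarrow> ps ! j < 0 \<Longrightarrow> \<exists>j'<n. j' \<noteq> j \<and> ps ! j' < 0 \<and> ws ! j + ws ! j' \<le> C"
  using inst unfolding pkp_instance_def by auto

lemma nI_pos: "1 \<le> nI" using n_pos by (simp add: nI_def)
lemma mm_ge3: "3 \<le> mm"
proof -
  have "1 \<le> nI * M" using nI_pos M1 by (metis mult_le_cancel_left1 order.trans zero_less_one_class.zero_le_one linorder_not_le mult.right_neutral order_less_le)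
  then show ?thesis unfolding mm_def by linarith
qed
lemma RR_pos: "0 < RR" using mm_ge3 by (simp add: RR_def)

lemma dd_nn: "0 \<le> dd j" unfolding dd_def neg_def using nI_pos by (auto intro!: add_nonneg_nonneg mult_nonneg_nonneg)
lemma dd_ge: "nI + 1 \<le> dd j"
proof -
  have "(nI + 1) * 1 \<le> (nI + 1) * (int (vf (ps ! j)) + 1)" using nI_pos by (intro mult_left_mono) auto
  then show ?thesis unfolding dd_def neg_def by auto
qed

lemma Wf_le: "Wf j K \<le> C + 1"
  using Cpos by (induction j arbitrary: K) (auto simp: min_le_iff_disj)

lemma Wf_nn: "j \<le> n \<Longrightarrow> 0 \<le> Wf j K"
proof (induction j arbitrary: K)
  case 0 then show ?case using Cpos by simp
next
  case (Suc j)
  then have "0 \<le> ws ! j" using w_nn by simp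
  then show ?case using Suc by (auto simp: min_def)
qed

lemma Wf_Suc_le: "Wf (Suc j) K \<le> Wf j K" by auto

lemma key_empty[simp]: "key {} = 0" by (simp add: key_def)
lemma wt_empty[simp]: "wt {} = 0" by (simp add: wt_def)

lemma key_nn: "finite S \<Longrightarrow> 0 \<le> key S" unfolding key_def using dd_nn by (simp add: sum_nonneg)

lemma Wf_opt: "S \<subseteq> {..<j} \<Longrightarrow> j \<le> n \<Longrightarrow> wt S \<le> C \<Longrightarrow> Wf j (key S) \<le> wt S"
proof (induction j arbitrary: S)
  case 0 then show ?case by simp
next
  case (Suc j)
  have fin: "finite S" using Suc.prems(1) finite_subset by blast
  show ?case
  proof (cases "j \<in> S")
    case False
    then have "S \<subseteq> {..<j}" using Suc.prems(1) by (auto simp: less_Suc_eq)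
    then have "Wf j (key S) \<le> wt S" using Suc by simp
    then show ?thesis using Wf_Suc_le[of j "key S"] by linarith
  next
    case True
    define S' where "S' = S - {j}"
    have S'sub: "S' \<subseteq> {..<j}" using Suc.prems(1) by (auto simp: S'_def less_Suc_eq)
    have fin': "finite S'" using fin by (simp add: S'_def)
    have kS: "key S = key S' + dd j" unfolding key_def S'_def using True fin
      by (simp add: sum.remove)
    have wS: "wt S = wt S' + ws ! j" unfolding wt_def S'_def using True fin
      by (simp add: sum.remove)
    have wj: "0 \<le> ws ! j" using w_nn Suc.prems(2) by simp
    have "wt S' \<le> C" using wS wj Suc.prems(3) by linarith
    then have IH: "Wf j (key S') \<le> wt S'" using Suc.IH[OF S'sub] Suc.prems(2) by simp
    have "dd j \<le> key S" using kS key_nn[OF fin'] by linarith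
    then have "Wf (Suc j) (key S) \<le> Wf j (key S - dd j) + ws ! j" by simp
    also have "key S - dd j = key S'" using kS by simp
    finally show ?thesis using IH wS by linarith
  qed
qed

lemma BT_correct: "j \<le> n \<Longrightarrow> Wf j K \<le> C \<Longrightarrow> BT j K \<subseteq> {..<j} \<and> key (BT j K) = K \<and> wt (BT j K) = Wf j K"
proof (induction j arbitrary: K)
  case 0 then show ?case by (simp split: if_splits)
next
  case (Suc j)
  show ?case
  proof (cases "Wf (Suc j) K < Wf j K")
    case True
    then have dK: "dd j \<le> K" and eq: "Wf (Suc j) K = Wf j (K - dd j) + ws ! j"
      by (auto split: if_splits simp: min_def)
    have wj: "0 \<le> ws ! j" using w_nn Suc.prems(1) by simp
    have "Wf j (K - dd j) \<le> C" using eq Suc.prems wj by linarith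
    then have IH: "BT j (K - dd j) \<subseteq> {..<j} \<and> key (BT j (K - dd j)) = K - dd j \<and> wt (BT j (K - dd j)) = Wf j (K - dd j)"
      using Suc by simp
    have fin: "finite (BT j (K - dd j))" using IH finite_subset by blast
    have nj: "j \<notin> BT j (K - dd j)" using IH by auto
    show ?thesis using True IH fin nj eq
      by (auto simp: key_def wt_def)
  next
    case False
    then have eq: "Wf (Suc j) K = Wf j K" using Wf_Suc_le[of j K] by linarith
    have "BT j K \<subseteq> {..<j} \<and> key (BT j K) = K \<and> wt (BT j K) = Wf j K"
      using Suc.IH[of K] Suc.prems eq by simp
    then show ?thesis using False eq by auto
  qed
qed

lemma div_up: "0 < (d::int) \<Longrightarrow> x < (x div d + 1) * d"
proof -
  assume d: "0 < d"
  have e: "x div d * d + x mod d = x" by simp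
  have r: "x mod d < d" using d by simp
  have "(x div d + 1) * d = x div d * d + d" by (simp add: distrib_right)
  then show ?thesis using e r by linarith
qed

lemma div_up_nat: "0 < (d::nat) \<Longrightarrow> x < (x div d + 1) * d"
proof -
  assume d: "0 < d"
  have e: "x div d * d + x mod d = x" by simp
  have r: "x mod d < d" using d by simp
  have "(x div d + 1) * d = x div d * d + d" by (simp add: distrib_right)
  then show ?thesis using e r by linarith
qed

lemma ysq_Suc': "ysq (Suc k) = ysq k + ysq k div mm"
proof -
  have "ysq k * (mm + 1) = ysq k + ysq k * mm" by (simp add: algebra_simps)
  then show ?thesis using mm_ge3 by simp
qed

lemma ysq_ge: "RR + int k * mm \<le> ysq k"
proof (induction k)
  case 0 then show ?case by simp
next
  case (Suc k)
  have "RR \<le> ysq k" using Suc mm_ge3 by (smt (verit) mult_nonneg_nonneg of_nat_0_le_iff)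
  then have "RR div mm \<le> ysq k div mm" by (rule zdiv_mono1) (use mm_ge3 in auto)
  moreover have "RR div mm = mm" unfolding RR_def using mm_ge3 by simp
  ultimately show ?case using Suc ysq_Suc'[of k] by (simp add: algebra_simps)
qed

lemma ysq_pos: "0 < ysq k" using ysq_ge[of k] RR_pos mm_ge3
  by (smt (verit) mult_nonneg_nonneg of_nat_0_le_iff)

lemma vf_ex: "\<exists>k. \<bar>p\<bar> * RR < ysq (Suc k)"
proof -
  define k where "k = nat (\<bar>p\<bar> * mm)"
  have "int k = \<bar>p\<bar> * mm" unfolding k_def using mm_ge3 by simp
  have "\<bar>p\<bar> * RR = \<bar>p\<bar> * mm * mm" by (simp add: RR_def)
  also have "\<dots> < RR + int (Suc k) * mm" using \<open>int k = \<bar>p\<bar> * mm\<close> mm_ge3 RR_pos by (simp add: algebra_simps)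
  also have "\<dots> \<le> ysq (Suc k)" by (rule ysq_ge)
  finally show ?thesis by blast
qed

lemma vf_hi: "\<bar>p\<bar> * RR < ysq (Suc (vf p))"
  unfolding vf_def by (rule LeastI_ex[OF vf_ex])

lemma vf_lo: assumes "p \<noteq> 0" shows "ysq (vf p) \<le> \<bar>p\<bar> * RR"
proof (cases "vf p")
  case 0
  then show ?thesis using assms RR_pos by simp
next
  case (Suc k)
  then have "k < vf p" by simp
  then have "\<not> \<bar>p\<bar> * RR < ysq (Suc k)" unfolding vf_def by (rule not_less_Least)
  then show ?thesis using Suc by simp
qed

lemma vf_lt: "k < vf p \<Longrightarrow> ysq (Suc k) \<le> \<bar>p\<bar> * RR"
  unfolding vf_def using not_less_Least by (metis not_less)

lemma vf_int_bound: assumes "p \<noteq> 0" shows "int (vf p) \<le> \<bar>p\<bar> * mm"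
proof -
  have "RR + int (vf p) * mm \<le> \<bar>p\<bar> * RR" using ysq_ge[of "vf p"] vf_lo[OF assms] by linarith
  then have "int (vf p) * mm \<le> (\<bar>p\<bar> - 1) * mm * mm" by (simp add: RR_def algebra_simps)
  then have "int (vf p) \<le> (\<bar>p\<bar> - 1) * mm" using mm_ge3 by (simp add: mult.commute)
  then show ?thesis using mm_ge3 by (simp add: algebra_simps)
qed

definition "bb = 1 + 1 / real_of_int mm"

lemma bb_gt1: "1 < bb" using mm_ge3 by (simp add: bb_def)

lemma ysq_up: "real_of_int (ysq k) \<le> real_of_int RR * bb ^ k"
proof (induction k)
  case 0 then show ?case by simp
next
  case (Suc k)
  have "real_of_int (ysq (Suc k)) \<le> real_of_int (ysq k * (mm + 1)) / real_of_int mm"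
    by (simp only: ysq.simps) (rule real_of_int_div4)
  also have "\<dots> = real_of_int (ysq k) * bb" using mm_ge3 by (simp add: bb_def field_simps)
  also have "\<dots> \<le> real_of_int RR * bb ^ k * bb" using Suc bb_gt1 by (simp add: mult_right_mono)
  finally show ?case by (simp add: algebra_simps)
qed

lemma ysq_low: "(real_of_int RR - real_of_int mm) * bb ^ k + real_of_int mm \<le> real_of_int (ysq k)"
proof (induction k)
  case 0 then show ?case by simp
next
  case (Suc k)
  have m0: "0 < real_of_int mm" using mm_ge3 by simp
  have "real_of_int (ysq k * (mm + 1)) / real_of_int mm - 1 \<le> real_of_int (ysq k * (mm + 1) div mm)"
  proof -
    have "real_of_int (ysq k * (mm + 1)) / real_of_int mm < real_of_int (ysq k * (mm + 1) div mm) + 1"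
    proof -
      have "ysq k * (mm + 1) < (ysq k * (mm + 1) div mm + 1) * mm"
        using mm_ge3 by (intro div_up) simp
      then have "real_of_int (ysq k * (mm + 1)) < real_of_int ((ysq k * (mm + 1) div mm + 1) * mm)" by linarith
      then show ?thesis using m0 by (simp add: divide_less_eq)
    qed
    then show ?thesis by linarith
  qed
  then have "real_of_int (ysq k) * bb - 1 \<le> real_of_int (ysq (Suc k))"
    using mm_ge3 by (simp add: bb_def field_simps)
  moreover have "((real_of_int RR - real_of_int mm) * bb ^ k + real_of_int mm) * bb \<le> real_of_int (ysq k) * bb"
    using Suc bb_gt1 by (simp add: mult_right_mono)
  moreover have "((real_of_int RR - real_of_int mm) * bb ^ k + real_of_int mm) * bb - 1
      = (real_of_int RR - real_of_int mm) * bb ^ Suc k + real_of_int mm"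
    using m0 by (simp add: bb_def field_simps)
  ultimately show ?case by linarith
qed

lemma p_lower: assumes "p \<noteq> 0" shows "(1 - 1 / real_of_int mm) * bb ^ vf p \<le> real_of_int \<bar>p\<bar>"
proof -
  have m0: "0 < real_of_int mm" using mm_ge3 by simp
  have R: "real_of_int RR = real_of_int mm * real_of_int mm" by (simp add: RR_def)
  have "(real_of_int RR - real_of_int mm) * bb ^ vf p \<le> real_of_int (ysq (vf p))"
    using ysq_low[of "vf p"] m0 by linarith
  also have "\<dots> \<le> real_of_int \<bar>p\<bar> * real_of_int RR" using vf_lo[OF assms] by (metis of_int_le_iff of_int_mult)
  finally have "(real_of_int RR - real_of_int mm) * bb ^ vf p \<le> real_of_int \<bar>p\<bar> * real_of_int RR" .
  moreover have "(1 - 1 / real_of_int mm) * bb ^ vf p = ((real_of_int RR - real_of_int mm) * bb ^ vf p) / real_of_int RR"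
    using m0 by (simp add: R field_simps)
  ultimately show ?thesis using RR_pos by (simp add: divide_le_eq)
qed

lemma p_upper: "real_of_int \<bar>p\<bar> \<le> bb ^ Suc (vf p)"
proof -
  have "real_of_int \<bar>p\<bar> * real_of_int RR \<le> real_of_int (ysq (Suc (vf p)))"
    using vf_hi[of p] by (metis of_int_le_iff of_int_mult less_imp_le)
  also have "\<dots> \<le> real_of_int RR * bb ^ Suc (vf p)" by (rule ysq_up)
  finally show ?thesis using RR_pos by (simp add: mult.commute)
qed

lemma bb_pow_mm: "2 \<le> bb ^ nat mm"
proof -
  have "1 + real (nat mm) * (1 / real_of_int mm) \<le> (1 + 1 / real_of_int mm) ^ nat mm"
  proof (rule Bernoulli_inequality)
    have "0 \<le> 1 / real_of_int mm" using mm_ge3 by simp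
    then show "- 1 \<le> 1 / real_of_int mm" by linarith
  qed
  then show ?thesis using mm_ge3 by (simp add: bb_def)
qed

lemma vf_real_bound: assumes "p \<noteq> 0" shows "real (vf p) \<le> real_of_int mm * (2 + log 2 (real_of_int \<bar>p\<bar>))"
proof -
  define q where "q = vf p div nat mm"
  have m0: "3 \<le> real_of_int mm" using mm_ge3 by simp
  have pa: "1 \<le> real_of_int \<bar>p\<bar>" using assms by simp
  have h: "1 / 2 \<le> 1 - 1 / real_of_int mm" using m0 by (simp add: field_simps)
  have "(1 / 2) * bb ^ vf p \<le> (1 - 1 / real_of_int mm) * bb ^ vf p"
    using bb_gt1 by (intro mult_right_mono[OF h]) simp
  also have "\<dots> \<le> real_of_int \<bar>p\<bar>" by (rule p_lower[OF assms])
  finally have b1: "bb ^ vf p \<le> 2 * real_of_int \<bar>p\<bar>" by simp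
  have "(2::real) ^ q \<le> (bb ^ nat mm) ^ q" using bb_pow_mm by (intro power_mono) auto
  also have "\<dots> = bb ^ (nat mm * q)" by (simp add: power_mult)
  also have "\<dots> \<le> bb ^ vf p" using bb_gt1 by (intro power_increasing) (auto simp: q_def)
  finally have "(2::real) ^ q \<le> 2 * real_of_int \<bar>p\<bar>" using b1 by linarith
  then have "real q \<le> log 2 (2 * real_of_int \<bar>p\<bar>)"
    by (intro le_log_of_power) auto
  also have "\<dots> = 1 + log 2 (real_of_int \<bar>p\<bar>)" using pa by (subst log_mult) auto
  finally have qb: "real q \<le> 1 + log 2 (real_of_int \<bar>p\<bar>)" .
  have "vf p < nat mm * (q + 1)" unfolding q_def using mm_ge3
    by (subst mult.commute, intro div_up_nat) simp
  then have "real (vf p) \<le> real (nat mm) * (real q + 1)" by (metis of_nat_1 of_nat_add of_nat_less_iff of_nat_mult less_imp_le)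
  also have "\<dots> \<le> real_of_int mm * (2 + log 2 (real_of_int \<bar>p\<bar>))"
    using qb mm_ge3 by (intro mult_mono) auto
  finally show ?thesis .
qed

lemma sum_Suc': "finite A \<Longrightarrow> (\<Sum>x\<in>A. Suc (f x)) = sum f A + card A"
  by (induction rule: finite_induct) auto

definition negc :: "nat set \<Rightarrow> int" where "negc S = (\<Sum>j\<in>S. neg j)"
definition vsum :: "nat set \<Rightarrow> nat" where "vsum S = (\<Sum>j\<in>S. Suc (vf (ps ! j)))"

lemma key_decomp: "key S = (nI + 1) * int (vsum S) + negc S"
proof -
  have 1: "key S = (\<Sum>j\<in>S. (nI + 1) * (int (vf (ps ! j)) + 1)) + negc S"
    unfolding key_def negc_def dd_def by (simp add: sum.distrib)
  have 2: "(\<Sum>j\<in>S. (nI + 1) * (int (vf (ps ! j)) + 1)) = (nI + 1) * (\<Sum>j\<in>S. (int (vf (ps ! j)) + 1))"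
    by (simp add: sum_distrib_left)
  have 3: "(\<Sum>j\<in>S. (int (vf (ps ! j)) + 1)) = int (vsum S)" unfolding vsum_def by (simp add: of_nat_sum add.commute)
  show ?thesis using 1 2 3 by simp
qed

lemma negc_bounds: assumes "S \<subseteq> {..<n}" shows "0 \<le> negc S" "negc S < nI + 1"
proof -
  have fin: "finite S" using assms finite_subset by blast
  show "0 \<le> negc S" unfolding negc_def neg_def by (simp add: sum_nonneg)
  have "negc S \<le> (\<Sum>j\<in>S. 1)" unfolding negc_def neg_def by (intro sum_mono) auto
  also have "\<dots> = int (card S)" by simp
  also have "\<dots> \<le> int n" using card_mono[OF _ assms] by simp
  finally show "negc S < nI + 1" by (simp add: nI_def)
qed

lemma key_mod: assumes "S \<subseteq> {..<n}" shows "key S mod (nI + 1) = negc S"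
proof -
  have "key S mod (nI + 1) = (negc S + (nI + 1) * int (vsum S)) mod (nI + 1)"
    by (simp add: key_decomp add.commute)
  also have "\<dots> = negc S mod (nI + 1)" by simp
  also have "\<dots> = negc S" using negc_bounds[OF assms] by simp
  finally show ?thesis .
qed

lemma vsum_mono_key: assumes "S \<subseteq> {..<n}" "T \<subseteq> {..<n}" "key S \<le> key T"
  shows "vsum S \<le> vsum T"
proof (rule ccontr)
  assume "\<not> vsum S \<le> vsum T"
  then have "int (vsum T) + 1 \<le> int (vsum S)" by simp
  then have "(nI + 1) * (int (vsum T) + 1) \<le> (nI + 1) * int (vsum S)" using nI_pos by (intro mult_left_mono) auto
  then have "key T < key S" using key_decomp[of S] key_decomp[of T] negc_bounds[OF assms(1)] negc_bounds[OF assms(2)]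
    by (simp add: algebra_simps)
  then show False using assms(3) by simp
qed

lemma prod_sign: "finite S \<Longrightarrow> (\<Prod>j\<in>S. real_of_int (ps ! j)) = (if even (negc S) then 1 else -1) * (\<Prod>j\<in>S. real_of_int \<bar>ps ! j\<bar>)"
proof (induction S rule: finite_induct)
  case empty then show ?case by (simp add: negc_def)
next
  case (insert x F)
  have nc: "negc (insert x F) = neg x + negc F" using insert by (simp add: negc_def)
  show ?case
  proof (cases "ps ! x < 0")
    case True
    then have "neg x = 1" by (simp add: neg_def)
    then show ?thesis using insert True nc by (auto simp: abs_if)
  next
    case False
    then have "neg x = 0" by (simp add: neg_def)
    then show ?thesis using insert False nc by (auto simp: abs_if)
  qed
qed

definition "FS = {S. feasible ws C S}"

lemma FS_fin: "finite FS"
proof -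
  have "FS \<subseteq> Pow {..<n}" unfolding FS_def feasible_def by auto
  then show ?thesis by (rule finite_subset) simp
qed

lemma opt_eq: "opt ws ps C = Max (obj ps ` FS)"
  unfolding opt_def FS_def by (simp add: image_def Setcompr_eq_image) (metis (mono_tags, lifting))

lemma empty_FS: "{} \<in> FS" unfolding FS_def feasible_def using Cpos by simp

lemma opt_ex: "\<exists>S\<in>FS. obj ps S = opt ws ps C"
  unfolding opt_eq using FS_fin empty_FS by (metis Max_in empty_iff finite_imageI image_iff image_is_empty)

lemma opt_ge: "S \<in> FS \<Longrightarrow> obj ps S \<le> opt ws ps C"
  unfolding opt_eq using FS_fin by simp

lemma opt_ge1: "1 \<le> opt ws ps C"
proof (cases "\<exists>j<n. 0 < ps ! j")
  case True
  then obtain j where j: "j < n" "0 < ps ! j" by blast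
  have "{j} \<in> FS" unfolding FS_def feasible_def using j w_le by auto
  moreover have "obj ps {j} = real_of_int (ps ! j)" by (simp add: obj_def)
  ultimately show ?thesis using opt_ge[of "{j}"] j by linarith
next
  case False
  have p0: "ps ! 0 < 0" using False p_nz n_pos by (metis less_le_trans not_le zero_less_one linorder_neqE)
  then obtain j' where j': "j' < n" "j' \<noteq> 0" "ps ! j' < 0" "ws ! 0 + ws ! j' \<le> C"
    using negpair n_pos by fastforce
  have "{0, j'} \<in> FS" unfolding FS_def feasible_def using j' n_pos by auto
  moreover have "obj ps {0, j'} = real_of_int (ps ! 0) * real_of_int (ps ! j')" using j' by (simp add: obj_def)
  moreover have "1 \<le> real_of_int (ps ! 0) * real_of_int (ps ! j')"
  proof -
    have "1 \<le> ps ! 0 * ps ! j'" using p0 j'(3) by (smt (verit) mult_le_cancel_left1 mult_minus_left mult_minus_right)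
    then show ?thesis by (metis of_int_1_le_iff of_int_mult)
  qed
  ultimately show ?thesis using opt_ge[of "{0, j'}"] by linarith
qed

lemma key_le_Kmax: "S \<subseteq> {..<n} \<Longrightarrow> key S \<le> Kmax"
  unfolding key_def Kmax_def using dd_nn by (intro sum_mono2) auto

lemma good0: "good 0"
proof -
  have "Wf n (key {}) \<le> wt {}" by (rule Wf_opt) (use Cpos in auto)
  then have "Wf n 0 \<le> 0" by simp
  then show ?thesis unfolding good_def using Cpos by simp
qed

lemma Kmax_nn: "0 \<le> Kmax" unfolding Kmax_def using dd_nn by (simp add: sum_nonneg)

lemma Kb_props: "good Kb" "0 \<le> Kb" "Kb \<le> Kmax" "\<And>K. 0 \<le> K \<Longrightarrow> K \<le> Kmax \<Longrightarrow> good K \<Longrightarrow> K \<le> Kb"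
proof -
  let ?A = "{K \<in> {0..Kmax}. good K}"
  have fin: "finite ?A" by (rule finite_subset[of _ "{0..Kmax}"]) auto
  have ne: "0 \<in> ?A" using good0 Kmax_nn by simp
  have "Kb \<in> ?A" unfolding Kb_def using fin ne by (intro Max_in) auto
  then show "good Kb" "0 \<le> Kb" "Kb \<le> Kmax" by auto
  fix K assume "0 \<le> K" "K \<le> Kmax" "good K"
  then show "K \<le> Kb" unfolding Kb_def using fin by (intro Max_ge) auto
qed

lemma Sel_props: "Sel \<subseteq> {..<n}" "key Sel = Kb" "wt Sel = Wf n Kb" "wt Sel \<le> C"
proof -
  have "Wf n Kb \<le> C" using Kb_props(1) by (simp add: good_def)
  then show "Sel \<subseteq> {..<n}" "key Sel = Kb" "wt Sel = Wf n Kb" "wt Sel \<le> C"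
    using BT_correct[of n Kb] unfolding Sel_def by auto
qed

lemma Sel_feasible: "feasible ws C Sel"
  using Sel_props unfolding feasible_def wt_def by auto

theorem Sel_approx: "(1 - 1 / real_of_int M) * opt ws ps C \<le> obj ps Sel"
proof -
  obtain S where S: "S \<in> FS" "obj ps S = opt ws ps C" using opt_ex by blast
  have Ssub: "S \<subseteq> {..<n}" and wS: "wt S \<le> C" using S(1) unfolding FS_def feasible_def wt_def by auto
  have finS: "finite S" using Ssub finite_subset by blast
  have o1: "1 \<le> obj ps S" using S opt_ge1 by simp
  then have Sne: "S \<noteq> {}" by (auto simp: obj_def)
  have prodS: "obj ps S = (\<Prod>j\<in>S. real_of_int (ps ! j))" using Sne by (simp add: obj_def)
  have evS: "even (negc S)"
  proof (rule ccontr)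
    assume "odd (negc S)"
    then have "obj ps S = - (\<Prod>j\<in>S. real_of_int \<bar>ps ! j\<bar>)" using prodS prod_sign[OF finS] by simp
    moreover have "0 \<le> (\<Prod>j\<in>S. real_of_int \<bar>ps ! j\<bar>)" by (simp add: prod_nonneg)
    ultimately show False using o1 by linarith
  qed
  have gS: "good (key S)" unfolding good_def using Wf_opt[OF Ssub _ wS] key_mod[OF Ssub] evS wS by auto
  have kS: "key S \<le> Kb" using Kb_props(4)[OF key_nn[OF finS] key_le_Kmax[OF Ssub] gS] .
  let ?T = Sel
  have Tsub: "?T \<subseteq> {..<n}" using Sel_props by simp
  have finT: "finite ?T" using Tsub finite_subset by blast
  have vs: "vsum S \<le> vsum ?T" using vsum_mono_key[OF Ssub Tsub] kS Sel_props by simp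
  have evT: "even (negc ?T)" using Kb_props(1) key_mod[OF Tsub] Sel_props by (simp add: good_def)
  have Tne: "?T \<noteq> {}"
  proof
    assume "?T = {}"
    then have "Kb = 0" using Sel_props by simp
    moreover obtain j where "j \<in> S" using Sne by blast
    then have "dd j \<le> key S" unfolding key_def using finS dd_nn by (intro member_le_sum) auto
    ultimately show False using kS dd_ge[of j] nI_pos by linarith
  qed
  have objT: "obj ps ?T = (\<Prod>j\<in>?T. real_of_int \<bar>ps ! j\<bar>)"
    using Tne prod_sign[OF finT] evT by (simp add: obj_def)
  have objS: "opt ws ps C = (\<Prod>j\<in>S. real_of_int \<bar>ps ! j\<bar>)"
    using S(2) prodS prod_sign[OF finS] evS by simp
  define a where "a = 1 - 1 / real_of_int mm"
  have m3: "3 \<le> real_of_int mm" using mm_ge3 by simp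
  have a0: "0 < a" using m3 by (simp add: a_def field_simps)
  have pnz: "\<And>j. j \<in> ?T \<Longrightarrow> ps ! j \<noteq> 0" using Tsub p_nz by auto
  have low: "(\<Prod>j\<in>?T. a * bb ^ vf (ps ! j)) \<le> obj ps ?T"
    unfolding objT using p_lower pnz a0 bb_gt1 by (intro prod_mono) (auto simp: a_def)
  have low2: "(\<Prod>j\<in>?T. a * bb ^ vf (ps ! j)) = a ^ card ?T * bb ^ (\<Sum>j\<in>?T. vf (ps ! j))"
    by (simp add: prod.distrib power_sum)
  have up: "opt ws ps C \<le> (\<Prod>j\<in>S. bb ^ Suc (vf (ps ! j)))"
    unfolding objS using p_upper by (intro prod_mono) auto
  also have "\<dots> = bb ^ vsum S" unfolding vsum_def by (simp add: power_sum)
  also have "\<dots> \<le> bb ^ vsum ?T" using bb_gt1 vs by (intro power_increasing) auto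
  also have "vsum ?T = (\<Sum>j\<in>?T. vf (ps ! j)) + card ?T" unfolding vsum_def using finT by (rule sum_Suc')
  finally have up2: "opt ws ps C \<le> bb ^ (\<Sum>j\<in>?T. vf (ps ! j)) * bb ^ card ?T" by (simp add: power_add)
  define r where "r = a / bb"
  have bb0: "0 < bb" using bb_gt1 by simp
  have r0: "0 \<le> r" using a0 bb0 by (simp add: r_def)
  have "0 \<le> 1 / real_of_int mm" using m3 by simp
  then have "a \<le> bb" using bb_gt1 unfolding a_def by linarith
  then have r1: "r \<le> 1" unfolding r_def using bb0 by (simp add: divide_le_eq)
  have "r ^ card ?T * opt ws ps C \<le> r ^ card ?T * (bb ^ (\<Sum>j\<in>?T. vf (ps ! j)) * bb ^ card ?T)"
    using up2 r0 by (intro mult_left_mono) auto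
  also have "\<dots> = a ^ card ?T * bb ^ (\<Sum>j\<in>?T. vf (ps ! j))"
    using bb0 by (simp add: r_def power_divide field_simps)
  also have "\<dots> \<le> obj ps ?T" using low low2 by simp
  finally have k1: "r ^ card ?T * opt ws ps C \<le> obj ps ?T" .
  have cT: "card ?T \<le> n" using card_mono[OF _ Tsub] by simp
  have "r ^ n \<le> r ^ card ?T" using r0 r1 cT by (intro power_decreasing) auto
  then have k2: "r ^ n * opt ws ps C \<le> obj ps ?T" using k1 opt_ge1 by (smt (verit) mult_right_mono)
  have r2: "1 - 2 / real_of_int mm \<le> r"
  proof -
    have "(1 - 2 / real_of_int mm) * bb \<le> a" using m3 by (simp add: a_def bb_def field_simps)
    then show ?thesis using bb0 by (simp add: r_def pos_le_divide_eq)
  qed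
  have "1 + real n * (- 2 / real_of_int mm) \<le> (1 + (- 2 / real_of_int mm)) ^ n"
    by (rule Bernoulli_inequality) (use m3 in \<open>simp add: field_simps\<close>)
  also have "\<dots> \<le> r ^ n" using r2 m3 by (intro power_mono) (auto simp: field_simps)
  finally have b1: "1 - 2 * real n / real_of_int mm \<le> r ^ n" by (simp add: mult.commute)
  have "2 * real n / real_of_int mm = 2 / (3 * real_of_int M)"
  proof -
    have "ws \<noteq> []" using n_pos by auto
    then show ?thesis using M1 by (simp add: mm_def nI_def field_simps)
  qed
  also have "\<dots> \<le> 1 / real_of_int M" using M1 by (simp add: field_simps)
  finally have "1 - 1 / real_of_int M \<le> r ^ n" using b1 by linarith
  then have "(1 - 1 / real_of_int M) * opt ws ps C \<le> r ^ n * opt ws ps C"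
    using opt_ge1 by (intro mult_right_mono) auto
  then show ?thesis using k2 by linarith
qed

end


context pkp
begin

definition "N0 = 2 + nI + C + pmax ps + M"
definition "BB = N0 ^ 20"
definition "A1 = 2 * nI + 2"
definition "TB = 3 * nI + 2"
definition "m0 = snd (init ws ps C)"

lemma pmax_ge: "j < n \<Longrightarrow> \<bar>ps ! j\<bar> \<le> pmax ps"
  unfolding pmax_def using lens by (intro Max_ge) auto
lemma pmax_ge1: "1 \<le> pmax ps"
  unfolding pmax_def by (intro Max_ge) auto

lemma N0_ge: "6 \<le> N0" using nI_pos Cpos M1 pmax_ge1 by (simp add: N0_def)

definition bd :: "nat \<Rightarrow> int \<Rightarrow> bool" where "bd k x \<longleftrightarrow> \<bar>x\<bar> \<le> N0 ^ k"

lemma bd_mono: "bd i x \<Longrightarrow> i \<le> k \<Longrightarrow> bd k x"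
  unfolding bd_def using N0_ge by (meson order_trans power_increasing one_le_numeral le_trans)

lemma bd_add: "bd k x \<Longrightarrow> bd k y \<Longrightarrow> bd (Suc k) (x + y)"
proof -
  assume "bd k x" "bd k y"
  then have "\<bar>x + y\<bar> \<le> 2 * N0 ^ k" unfolding bd_def by linarith
  also have "\<dots> \<le> N0 * N0 ^ k" using N0_ge by (intro mult_right_mono) auto
  finally show ?thesis by (simp add: bd_def)
qed

lemma bd_add': "bd k x \<Longrightarrow> bd k y \<Longrightarrow> Suc k \<le> k' \<Longrightarrow> bd k' (x + y)"
  using bd_add bd_mono by blast
lemma bd_sub: "bd k x \<Longrightarrow> bd k y \<Longrightarrow> bd (Suc k) (x - y)"
  using bd_add[of k x "- y"] by (simp add: bd_def)

lemma bd_mult: "bd i x \<Longrightarrow> bd k y \<Longrightarrow> bd (i + k) (x * y)"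
  unfolding bd_def by (simp add: abs_mult power_add mult_mono')

lemma bd_sub': "bd k x \<Longrightarrow> bd k y \<Longrightarrow> Suc k \<le> k' \<Longrightarrow> bd k' (x - y)"
  using bd_sub bd_mono by blast
lemma bd_mult': "bd i x \<Longrightarrow> bd k y \<Longrightarrow> i + k \<le> k' \<Longrightarrow> bd k' (x * y)"
  using bd_mult bd_mono by blast
lemma bd_neg: "bd k x \<Longrightarrow> bd k (- x)" by (simp add: bd_def)
lemma bd_abs: "bd k x \<Longrightarrow> bd k \<bar>x\<bar>" by (simp add: bd_def)

lemma bd1: "\<bar>x\<bar> \<le> N0 \<Longrightarrow> bd 1 x" by (simp add: bd_def)
lemma bd_nI: "bd 1 nI" and bd_C: "bd 1 C" and bd_M: "bd 1 M" and bd_1: "bd 1 1" and bd_2: "bd 1 2"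
  and bd_3: "bd 1 3" and bd_0: "bd 1 0"
  using nI_pos Cpos M1 pmax_ge1 N0_ge unfolding bd_def N0_def by auto
lemma bd_p: "j < n \<Longrightarrow> bd 1 (ps ! j)"
  using pmax_ge[of j] nI_pos Cpos M1 unfolding bd_def N0_def by auto
lemma bd_w: "j < n \<Longrightarrow> bd 1 (ws ! j)"
  using w_le[of j] w_nn[of j] nI_pos Cpos M1 pmax_ge1 unfolding bd_def N0_def by auto
lemma bd_j: "j \<le> n \<Longrightarrow> bd 1 (int j)"
  using nI_pos Cpos M1 pmax_ge1 unfolding bd_def N0_def nI_def by auto

lemma inb_bd: "bd k x \<Longrightarrow> k \<le> 20 \<Longrightarrow> inb BB x"
  unfolding inb_def BB_def using bd_mono bd_def by blast

lemma bd_mm: "bd 3 mm" unfolding mm_def using bd_mult[OF bd_mult[OF bd_3 bd_nI] bd_M] by (simp add: eval_nat_numeral)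
lemma bd_RR: "bd 6 RR" unfolding RR_def using bd_mult[OF bd_mm bd_mm] by (simp add: eval_nat_numeral)

lemma m0_0: "m0 0 = nI" and m0_1: "m0 1 = C"
  by (simp_all add: m0_def init_def nI_def)
lemma m0_neg: "a < 0 \<Longrightarrow> m0 a = 0" by (simp add: m0_def init_def)
lemma m0_hi: "A1 \<le> a \<Longrightarrow> m0 a = 0" using nI_pos by (simp add: m0_def init_def A1_def nI_def)
lemma m0_w: "i < n \<Longrightarrow> m0 (2 * int i + 2) = ws ! i"
  by (simp add: m0_def init_def)
lemma m0_p: "i < n \<Longrightarrow> m0 (2 * int i + 3) = ps ! i"
proof -
  assume i: "i < n"
  have "(2 * int i + 3 - 2) div 2 = int i" by simp
  then show ?thesis using i by (simp add: m0_def init_def)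
qed
lemma bnd_m0: "bnd BB m0"
  unfolding bnd_def
proof
  fix a
  have "bd 1 (m0 a)"
    unfolding m0_def init_def using bd_nI bd_C bd_0 bd_w bd_p nI_def
    by (auto simp: nat_less_iff)
  then show "\<bar>m0 a\<bar> \<le> BB" using inb_bd[of 1 "m0 a"] by (simp add: inb_def)
qed

definition vars :: "(int \<Rightarrow> int) \<Rightarrow> bool" where
  "vars m \<longleftrightarrow> m (-1) = 1 \<and> m (-15) = 2 \<and> m (-16) = 3 \<and> m (-30) = 0 \<and> m (-2) = nI \<and> m (-3) = C + 1
    \<and> m (-4) = mm \<and> m (-5) = RR \<and> m (-6) = mm + 1 \<and> m (-7) = nI + 1 \<and> m (-10) = A1 \<and> m (-11) = TB"

lemma varsD: "vars m \<Longrightarrow> m (-1) = 1 \<and> m (-15) = 2 \<and> m (-16) = 3 \<and> m (-30) = 0 \<and> m (-2) = nI \<and> m (-3) = C + 1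
    \<and> m (-4) = mm \<and> m (-5) = RR \<and> m (-6) = mm + 1 \<and> m (-7) = nI + 1 \<and> m (-10) = A1 \<and> m (-11) = TB"
  by (simp add: vars_def)

definition "sdd j = (\<Sum>i<j. dd i)"

definition I1 :: "nat \<Rightarrow> (int \<Rightarrow> int) \<Rightarrow> bool" where
  "I1 j m \<longleftrightarrow> vars m \<and> bnd BB m \<and> m (-8) = int j \<and> m (-9) = sdd j
    \<and> (\<forall>a. 0 \<le> a \<longrightarrow> a < A1 \<longrightarrow> m a = m0 a) \<and> (\<forall>i<j. m (A1 + int i) = dd i)
    \<and> (\<forall>a. A1 + int j \<le> a \<longrightarrow> m a = 0)"

lemma A1_pos: "0 < A1" using nI_pos by (simp add: A1_def)

lemma phase0: "ht M BB 0 m0 15 15 (I1 0)"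
proof -
  have f: "m0 0 = nI" "m0 1 = C" "m0 (-30) = 0" "bnd BB m0" using m0_0 m0_1 m0_neg bnd_m0 by auto
  have b: "inb BB 1" "inb BB 2" "inb BB 3" "inb BB nI" "inb BB (C + 1)" "inb BB M" "inb BB (nI * M)"
    "inb BB (nI * M + nI * M)" "inb BB (nI * M + nI * M + nI * M)"
    "inb BB ((nI * M + nI * M + nI * M) * (nI * M + nI * M + nI * M))"
    "inb BB (nI * M + nI * M + nI * M + 1)" "inb BB (nI + 1)" "inb BB (nI + nI)" "inb BB (nI + nI + 2)"
    "inb BB (nI + nI + 2 + nI)"
  proof -
    have m: "bd 2 (nI * M)" using bd_mult[OF bd_nI bd_M] by (simp add: eval_nat_numeral)
    have m2: "bd 3 (nI * M + nI * M)" using bd_add[OF m m] by (simp add: eval_nat_numeral)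
    have m3: "bd 4 (nI * M + nI * M + nI * M)" using bd_add[OF m2 bd_mono[OF m, of 3]] by (simp add: eval_nat_numeral)
    have n2: "bd 2 (nI + nI)" using bd_add[OF bd_nI bd_nI] by (simp add: eval_nat_numeral)
    have n3: "bd 3 (nI + nI + 2)" using bd_add[OF n2 bd_mono[OF bd_2, of 2]] by (simp add: eval_nat_numeral)
    show "inb BB 1" "inb BB 2" "inb BB 3" "inb BB nI" "inb BB M" "inb BB (nI * M)"
      "inb BB (nI * M + nI * M)" "inb BB (nI * M + nI * M + nI * M)" "inb BB (nI + nI)" "inb BB (nI + nI + 2)"
      using inb_bd bd_1 bd_2 bd_3 bd_nI bd_M m m2 m3 n2 n3 by auto
    show "inb BB (C + 1)" using inb_bd[OF bd_add[OF bd_C bd_1]] by simp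
    show "inb BB (nI + 1)" using inb_bd[OF bd_add[OF bd_nI bd_1]] by simp
    show "inb BB ((nI * M + nI * M + nI * M) * (nI * M + nI * M + nI * M))" using inb_bd[OF bd_mult[OF m3 m3]] by simp
    show "inb BB (nI * M + nI * M + nI * M + 1)" using inb_bd[OF bd_add[OF m3 bd_mono[OF bd_1, of 4]]] by simp
    show "inb BB (nI + nI + 2 + nI)" using inb_bd[OF bd_add[OF n3 bd_mono[OF bd_nI, of 3]]] by simp
  qed
  show ?thesis
    apply (insert f b)
    apply (rule ht_step, simp only: prog_nth, simp, simp, simp add: bnd_simps, simp, simp del: exec.simps add: exec_simps', (simp only: pcnorm)?)+
    apply (rule ht_done)
     apply (simp add: bnd_simps)
    apply (simp add: I1_def vars_def bnd_simps mm_def RR_def A1_def TB_def sdd_def algebra_simps)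
    using m0_hi m0_neg A1_pos apply (auto simp: A1_def)
    done
qed

lemma ysq_mono_Suc: "ysq k \<le> ysq (Suc k)"
  using ysq_Suc'[of k] ysq_pos[of k] mm_ge3 by (simp add: pos_imp_zdiv_nonneg_iff)

lemma ysq_mono: "k \<le> k' \<Longrightarrow> ysq k \<le> ysq k'"
  by (induction k' rule: dec_induct) (auto intro: order_trans ysq_mono_Suc simp del: ysq.simps)

lemma ysq_Suc_le2: "ysq (Suc k) \<le> 2 * ysq k"
proof -
  have "ysq k div mm \<le> ysq k div 1" using ysq_pos[of k] mm_ge3 by (intro zdiv_mono2) auto
  then show ?thesis using ysq_Suc'[of k] by simp
qed

lemma bd_absp_RR: "j < n \<Longrightarrow> bd 7 (\<bar>ps ! j\<bar> * RR)"
  using bd_mult[OF bd_abs[OF bd_p] bd_RR] by (simp add: eval_nat_numeral)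

lemma bd_ysq: assumes "j < n" "k \<le> vf (ps ! j)" shows "bd 7 (ysq k)"
proof -
  have "ysq k \<le> \<bar>ps ! j\<bar> * RR" using ysq_mono[OF assms(2)] vf_lo[OF p_nz[OF assms(1)]] by linarith
  then show ?thesis using bd_absp_RR[OF assms(1)] ysq_pos[of k] unfolding bd_def by simp
qed

lemma bd_ysq_Suc: assumes "j < n" "k \<le> vf (ps ! j)" shows "bd 8 (ysq (Suc k))"
proof -
  have "bd 8 (ysq k + ysq k)" using bd_add[OF bd_ysq[OF assms] bd_ysq[OF assms]] by (simp add: eval_nat_numeral)
  then show ?thesis using ysq_Suc_le2[of k] ysq_pos[of "Suc k"] ysq_pos[of k] unfolding bd_def by simp
qed

lemma bd_vf: "j < n \<Longrightarrow> bd 4 (int (vf (ps ! j)))"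
proof -
  assume j: "j < n"
  have "bd 4 (\<bar>ps ! j\<bar> * mm)" using bd_mult[OF bd_abs[OF bd_p[OF j]] bd_mm] by (simp add: eval_nat_numeral)
  then show ?thesis using vf_int_bound[OF p_nz[OF j]] unfolding bd_def by simp
qed

lemma bd_k: assumes "j < n" "k \<le> vf (ps ! j)" shows "bd 4 (int k)"
proof -
  have "int k \<le> int (vf (ps ! j))" using assms by simp
  then show ?thesis using bd_vf[OF assms(1)] unfolding bd_def by simp
qed

lemma bd_neg_j: "bd 1 (neg j)" unfolding neg_def using bd_0 bd_1 by auto

lemma bd_dd: "j < n \<Longrightarrow> bd 8 (dd j)"
proof -
  assume j: "j < n"
  have a: "bd 5 (int (vf (ps ! j)) + 1)" using bd_add[OF bd_vf[OF j] bd_mono[OF bd_1, of 4]] by (simp add: eval_nat_numeral)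
  have b: "bd 2 (nI + 1)" using bd_add[OF bd_nI bd_1] by (simp add: eval_nat_numeral)
  have "bd 7 ((nI + 1) * (int (vf (ps ! j)) + 1))" using bd_mult[OF b a] by simp
  then show ?thesis unfolding dd_def using bd_add[OF _ bd_mono[OF bd_neg_j, of 7]] by (simp add: eval_nat_numeral)
qed

lemma bd_sdd: assumes "j \<le> n" shows "bd 9 (sdd j)"
proof -
  have "sdd j \<le> (\<Sum>i<j. N0 ^ 8)" unfolding sdd_def
  proof (intro sum_mono)
    fix i assume "i \<in> {..<j}"
    then have "bd 8 (dd i)" using bd_dd assms by simp
    then show "dd i \<le> N0 ^ 8" unfolding bd_def by simp
  qed
  also have "\<dots> = int j * N0 ^ 8" by simp
  also have "\<dots> \<le> N0 * N0 ^ 8" using bd_j[OF assms] N0_ge unfolding bd_def by (intro mult_right_mono) auto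
  also have "N0 * N0 ^ 8 = N0 ^ 9" by (simp add: eval_nat_numeral)
  finally have "sdd j \<le> N0 ^ 9" .
  moreover have "0 \<le> sdd j" unfolding sdd_def using dd_nn by (simp add: sum_nonneg)
  ultimately show ?thesis unfolding bd_def by simp
qed

definition J1 :: "nat \<Rightarrow> nat \<Rightarrow> (int \<Rightarrow> int) \<Rightarrow> bool" where
  "J1 j k m \<longleftrightarrow> vars m \<and> bnd BB m \<and> m (-8) = int j \<and> m (-9) = sdd j
    \<and> (\<forall>a. 0 \<le> a \<longrightarrow> a < A1 \<longrightarrow> m a = m0 a) \<and> (\<forall>i<j. m (A1 + int i) = dd i)
    \<and> (\<forall>a. A1 + int j \<le> a \<longrightarrow> m a = 0)
    \<and> m (-19) = neg j \<and> m (-20) = \<bar>ps ! j\<bar> * RR \<and> m (-21) = int k \<and> m (-22) = ysq k \<and> k \<le> vf (ps ! j)"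

lemma p1a: assumes j: "j < n" and I: "I1 j m" shows "ht M BB 15 m 12 29 (J1 j 0)"
proof -
  have v: "m (-1) = 1" "m (-15) = 2" "m (-16) = 3" "m (-30) = 0" "m (-2) = nI" "m (-3) = C + 1"
    "m (-4) = mm" "m (-5) = RR" "m (-6) = mm + 1" "m (-7) = nI + 1" "m (-10) = A1" "m (-11) = TB"
    "m (-8) = int j" "bnd BB m"
    using I unfolding I1_def vars_def by auto
  have inp: "m (int j + int j + 3) = ps ! j"
  proof -
    have "int j + int j + 3 < A1" using j by (simp add: A1_def nI_def)
    then have "m (int j + int j + 3) = m0 (int j + int j + 3)" using I unfolding I1_def by auto
    moreover have "int j + int j + 3 = 2 * int j + 3" by simp
    ultimately show ?thesis using m0_p[OF j] by simp
  qed
  have jn: "0 < nI - int j" using j by (simp add: nI_def)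
  have b: "inb BB (nI - int j)" "inb BB (int j + int j)" "inb BB (int j + int j + 3)" "inb BB (ps ! j)"
    "inb BB (- ps ! j)" "inb BB 1" "inb BB 0" "inb BB (\<bar>ps ! j\<bar> * RR)" "inb BB RR"
  proof -
    have jj: "bd 2 (int j + int j)" by (rule bd_add'[OF bd_j bd_j]) (use j in auto)
    show "inb BB (nI - int j)" by (rule inb_bd[OF bd_sub'[OF bd_nI bd_j]]) (use j in auto)
    show "inb BB (int j + int j)" using inb_bd[OF jj] by simp
    show "inb BB (int j + int j + 3)" by (rule inb_bd[OF bd_add'[OF jj bd_mono[OF bd_3, of 2]]]) auto
    show "inb BB (ps ! j)" "inb BB (- ps ! j)" using inb_bd[OF bd_p[OF j]] inb_bd[OF bd_neg[OF bd_p[OF j]]] by auto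
    show "inb BB 1" "inb BB 0" using inb_bd[OF bd_1] inb_bd[OF bd_0] by auto
    show "inb BB (\<bar>ps ! j\<bar> * RR)" using inb_bd[OF bd_absp_RR[OF j]] by simp
    show "inb BB RR" using inb_bd[OF bd_RR] by simp
  qed
  have post: "J1 j 0 m'" if "bnd BB m'" "\<forall>a. 0 \<le> a \<longrightarrow> m' a = m a" "\<forall>a\<in>{-1,-15,-16,-30,-2,-3,-4,-5,-6,-7,-10,-11,-8,-9}. m' a = m a"
    "m' (-19) = neg j" "m' (-20) = \<bar>ps ! j\<bar> * RR" "m' (-21) = 0" "m' (-22) = RR" for m'
  proof -
    have "vars m'" using I that unfolding I1_def vars_def by auto
    moreover have "\<forall>a. 0 \<le> a \<longrightarrow> a < A1 \<longrightarrow> m' a = m0 a" "\<forall>i<j. m' (A1 + int i) = dd i"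
      "\<forall>a. A1 + int j \<le> a \<longrightarrow> m' a = 0"
      using I that(2) A1_pos unfolding I1_def by auto
    ultimately show ?thesis using I that unfolding J1_def I1_def by auto
  qed
  show ?thesis
  proof (cases "0 < ps ! j")
    case True
    show ?thesis
      apply (rule ht_mono[where T=10 and Q="J1 j 0"])
        prefer 2 apply simp
       prefer 2 apply assumption
      apply (insert v inp jn b True)
      apply (rule ht_step, simp only: prog_nth, simp, simp, simp add: bnd_simps, simp, simp del: exec.simps add: exec_simps', (simp only: pcnorm)?)+
      apply (rule ht_done)
       apply (simp add: bnd_simps)
      apply (rule post)
      apply (auto simp: neg_def bnd_simps)
      done
  next
    case False
    then have Fn: "ps ! j < 0" using p_nz[OF j] by linarith
    show ?thesis
      apply (insert v inp jn b Fn)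
      apply (rule ht_step, simp only: prog_nth, simp, simp, simp add: bnd_simps, simp, simp del: exec.simps add: exec_simps', (simp only: pcnorm)?)+
      apply (rule ht_done)
       apply (simp add: bnd_simps)
      apply (rule post)
      apply (auto simp: neg_def bnd_simps)
      done
  qed
qed

lemma J1D: "J1 j k m \<Longrightarrow> m (-1) = 1 \<and> m (-15) = 2 \<and> m (-16) = 3 \<and> m (-30) = 0 \<and> m (-2) = nI \<and> m (-3) = C + 1
    \<and> m (-4) = mm \<and> m (-5) = RR \<and> m (-6) = mm + 1 \<and> m (-7) = nI + 1 \<and> m (-10) = A1 \<and> m (-11) = TB
    \<and> m (-8) = int j \<and> m (-9) = sdd j \<and> m (-19) = neg j \<and> m (-20) = \<bar>ps ! j\<bar> * RR \<and> m (-21) = int k \<and> m (-22) = ysq k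
    \<and> bnd BB m \<and> k \<le> vf (ps ! j)"
  unfolding J1_def vars_def by auto

lemma p1b: assumes j: "j < n" and k: "k < vf (ps ! j)" and I: "J1 j k m" shows "ht M BB 29 m 7 29 (J1 j (Suc k))"
proof -
  note v = J1D[OF I]
  have c: "ysq k * (mm + 1) div mm \<le> \<bar>ps ! j\<bar> * RR" using vf_lt[OF k] by simp
  have kk: "k \<le> vf (ps ! j)" using k by simp
  have b: "inb BB (ysq k * (mm + 1))" "inb BB (ysq k * (mm + 1) div mm)"
    "inb BB (ysq k * (mm + 1) div mm - \<bar>ps ! j\<bar> * RR)" "inb BB (int k + 1)"
  proof -
    have m1: "bd 4 (mm + 1)" by (rule bd_add'[OF bd_mm bd_mono[OF bd_1, of 3]]) auto
    show "inb BB (ysq k * (mm + 1))" by (rule inb_bd[OF bd_mult'[OF bd_ysq[OF j kk] m1]]) auto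
    have y: "bd 8 (ysq k * (mm + 1) div mm)" using bd_ysq_Suc[OF j kk] by simp
    show "inb BB (ysq k * (mm + 1) div mm)" by (rule inb_bd[OF y]) auto
    show "inb BB (ysq k * (mm + 1) div mm - \<bar>ps ! j\<bar> * RR)"
      by (rule inb_bd[OF bd_sub'[OF y bd_mono[OF bd_absp_RR[OF j], of 8]]]) auto
    show "inb BB (int k + 1)" by (rule inb_bd[OF bd_add'[OF bd_k[OF j kk] bd_mono[OF bd_1, of 4]]]) auto
  qed
  have post: "J1 j (Suc k) m'" if "bnd BB m'" "\<forall>a. 0 \<le> a \<longrightarrow> m' a = m a"
    "\<forall>a\<in>{-1,-15,-16,-30,-2,-3,-4,-5,-6,-7,-10,-11,-8,-9,-19,-20}. m' a = m a"
    "m' (-21) = int k + 1" "m' (-22) = ysq k * (mm + 1) div mm" for m'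
  proof -
    have "vars m'" using I that unfolding J1_def vars_def by auto
    moreover have "\<forall>a. 0 \<le> a \<longrightarrow> a < A1 \<longrightarrow> m' a = m0 a" "\<forall>i<j. m' (A1 + int i) = dd i"
      "\<forall>a. A1 + int j \<le> a \<longrightarrow> m' a = 0"
      using I that(2) A1_pos unfolding J1_def by auto
    ultimately show ?thesis using I that k unfolding J1_def by auto
  qed
  show ?thesis
    apply (insert v c b)
    apply (rule ht_step, simp only: prog_nth, simp, simp, simp add: bnd_simps, simp, simp del: exec.simps add: exec_simps', (simp only: pcnorm)?)+
    apply (rule ht_done)
     apply (simp add: bnd_simps)
    apply (rule post)
    apply (auto simp: bnd_simps)
    done
qed

lemma p1c: assumes j: "j < n" and I: "J1 j (vf (ps ! j)) m" shows "ht M BB 29 m 12 15 (I1 (Suc j))"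
proof -
  define k where "k = vf (ps ! j)"
  have I': "J1 j k m" using I by (simp add: k_def)
  note v = J1D[OF I']
  have c: "\<bar>ps ! j\<bar> * RR < ysq k * (mm + 1) div mm" using vf_hi[of "ps ! j"] by (simp add: k_def)
  have kk: "k \<le> vf (ps ! j)" by (simp add: k_def)
  have A: "0 < A1" by (rule A1_pos)
  have b: "inb BB (ysq k * (mm + 1))" "inb BB (ysq k * (mm + 1) div mm)"
    "inb BB (ysq k * (mm + 1) div mm - \<bar>ps ! j\<bar> * RR)" "inb BB (int k + 1)"
    "inb BB ((int k + 1) * (nI + 1))" "inb BB ((int k + 1) * (nI + 1) + neg j)" "inb BB (A1 + int j)"
    "inb BB (sdd j + ((int k + 1) * (nI + 1) + neg j))" "inb BB (int j + 1)"
  proof -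
    have m1: "bd 4 (mm + 1)" by (rule bd_add'[OF bd_mm bd_mono[OF bd_1, of 3]]) auto
    show "inb BB (ysq k * (mm + 1))" by (rule inb_bd[OF bd_mult'[OF bd_ysq[OF j kk] m1]]) auto
    have y: "bd 8 (ysq k * (mm + 1) div mm)" using bd_ysq_Suc[OF j kk] by simp
    show "inb BB (ysq k * (mm + 1) div mm)" by (rule inb_bd[OF y]) auto
    show "inb BB (ysq k * (mm + 1) div mm - \<bar>ps ! j\<bar> * RR)"
      by (rule inb_bd[OF bd_sub'[OF y bd_mono[OF bd_absp_RR[OF j], of 8]]]) auto
    have k1: "bd 5 (int k + 1)" by (rule bd_add'[OF bd_k[OF j kk] bd_mono[OF bd_1, of 4]]) auto
    show "inb BB (int k + 1)" by (rule inb_bd[OF k1]) auto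
    have n1: "bd 2 (nI + 1)" by (rule bd_add'[OF bd_nI bd_1]) auto
    have kn: "bd 7 ((int k + 1) * (nI + 1))" by (rule bd_mult'[OF k1 n1]) auto
    show "inb BB ((int k + 1) * (nI + 1))" by (rule inb_bd[OF kn]) auto
    have ddj: "(int k + 1) * (nI + 1) + neg j = dd j" by (simp add: dd_def k_def algebra_simps)
    show "inb BB ((int k + 1) * (nI + 1) + neg j)" unfolding ddj by (rule inb_bd[OF bd_dd[OF j]]) auto
    have a1: "bd 3 A1" unfolding A1_def
      by (rule bd_add'[OF bd_mult'[OF bd_2 bd_nI] bd_mono[OF bd_2]]) auto
    show "inb BB (A1 + int j)" by (rule inb_bd[OF bd_add'[OF a1 bd_mono[OF bd_j]]]) (use j in auto)
    show "inb BB (sdd j + ((int k + 1) * (nI + 1) + neg j))" unfolding ddj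
      by (rule inb_bd[OF bd_add'[OF bd_sdd bd_mono[OF bd_dd[OF j]]]]) (use j in auto)
    show "inb BB (int j + 1)" by (rule inb_bd[OF bd_add'[OF bd_j bd_1]]) (use j in auto)
  qed
  have post: "I1 (Suc j) m'" if "bnd BB m'" "\<forall>a. 0 \<le> a \<longrightarrow> a \<noteq> A1 + int j \<longrightarrow> m' a = m a"
    "\<forall>a\<in>{-1,-15,-16,-30,-2,-3,-4,-5,-6,-7,-10,-11}. m' a = m a"
    "m' (-8) = int j + 1" "m' (-9) = sdd j + ((int k + 1) * (nI + 1) + neg j)"
    "m' (A1 + int j) = (int k + 1) * (nI + 1) + neg j" for m'
  proof -
    have ddj: "(int k + 1) * (nI + 1) + neg j = dd j" by (simp add: dd_def k_def algebra_simps)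
    have "vars m'" using I that unfolding J1_def vars_def by auto
    moreover have "\<forall>a. 0 \<le> a \<longrightarrow> a < A1 \<longrightarrow> m' a = m0 a" using I that(2) A1_pos unfolding J1_def by auto
    moreover have "\<forall>i<Suc j. m' (A1 + int i) = dd i"
    proof (intro allI impI)
      fix i assume "i < Suc j"
      then show "m' (A1 + int i) = dd i"
        using I that(2,6) A1_pos ddj unfolding J1_def by (cases "i = j") auto
    qed
    moreover have "\<forall>a. A1 + int (Suc j) \<le> a \<longrightarrow> m' a = 0" using I that(2) A1_pos unfolding J1_def by auto
    moreover have "sdd (Suc j) = sdd j + dd j" by (simp add: sdd_def)
    ultimately show ?thesis using that ddj unfolding I1_def by auto
  qed
  show ?thesis
    apply (insert v c b A)
    apply (rule ht_step, simp only: prog_nth, simp, simp, simp add: bnd_simps, simp, simp del: exec.simps add: exec_simps', (simp only: pcnorm)?)+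
    apply (rule ht_done)
     apply (simp add: bnd_simps)
    apply (rule post)
    apply (auto simp: bnd_simps)
    done
qed

lemma p1x: assumes I: "I1 n m" shows "ht M BB 15 m 3 44 (I1 n)"
proof -
  have v: "m (-2) = nI" "m (-8) = int n" "bnd BB m" using I unfolding I1_def vars_def by auto
  have b: "inb BB (nI - int n)" using inb_bd[OF bd_0] by (simp add: nI_def)
  have nn: "nI - int n = 0" by (simp add: nI_def)
  show ?thesis
    apply (insert v b nn)
    apply (rule ht_step, simp only: prog_nth, simp, simp, simp add: bnd_simps, simp, simp del: exec.simps add: exec_simps', (simp only: pcnorm)?)+
    apply (rule ht_done)
     apply (simp add: bnd_simps)
    using I A1_pos apply (auto simp: I1_def vars_def bnd_simps)
    done
qed

lemma p1body: assumes j: "j < n" and I: "I1 j m" shows "ht M BB 15 m (24 + 7 * vf (ps ! j)) 15 (I1 (Suc j))"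
proof -
  have e: "24 + 7 * vf (ps ! j) = (12 + (\<Sum>k\<in>{0..<vf (ps ! j)}. 7)) + 12" by simp
  show ?thesis unfolding e
  proof (rule ht_trans[OF ht_trans[OF p1a[OF j I]]])
    fix m1 assume "J1 j 0 m1"
    show "ht M BB 29 m1 (\<Sum>k\<in>{0..<vf (ps ! j)}. 7) 29 (J1 j (vf (ps ! j)))"
      by (rule ht_loop[where I="J1 j"]) (use p1b[OF j] \<open>J1 j 0 m1\<close> in \<open>auto simp: J1_def\<close>)
  next
    fix m2 assume "J1 j (vf (ps ! j)) m2"
    then show "ht M BB 29 m2 12 15 (I1 (Suc j))" by (rule p1c[OF j])
  qed
qed

definition "T1 = (\<Sum>j<n. 24 + 7 * vf (ps ! j))"

lemma phase1: assumes I: "I1 0 m" shows "ht M BB 15 m (T1 + 3) 44 (I1 n)"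
proof (rule ht_trans)
  show "ht M BB 15 m T1 15 (I1 n)" unfolding T1_def lessThan_atLeast0
    by (rule ht_loop[where I=I1]) (use p1body I in \<open>auto simp: I1_def\<close>)
next
  fix m1 assume "I1 n m1" then show "ht M BB 15 m1 3 44 (I1 n)" by (rule p1x)
qed


end


context pkp
begin

lemma Kmax_eq: "sdd n = Kmax" by (simp add: sdd_def Kmax_def)
lemma L_pos: "1 \<le> L" using Kmax_nn by (simp add: L_def)
lemma TB_A1: "TB = A1 + nI" by (simp add: TB_def A1_def)

lemma bd_Kmax: "bd 9 Kmax" using bd_sdd[of n] Kmax_eq by simp
lemma bd_L: "bd 10 L" unfolding L_def by (rule bd_add'[OF bd_Kmax bd_mono[OF bd_1]]) auto
lemma bd_TB: "bd 3 TB" unfolding TB_def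
  by (rule bd_add'[OF bd_mult'[OF bd_3 bd_nI] bd_mono[OF bd_2]]) auto
lemma bd_A1: "bd 3 A1" unfolding A1_def
  by (rule bd_add'[OF bd_mult'[OF bd_2 bd_nI] bd_mono[OF bd_2]]) auto

definition I2 :: "nat \<Rightarrow> (int \<Rightarrow> int) \<Rightarrow> bool" where
  "I2 k m \<longleftrightarrow> vars m \<and> bnd BB m \<and> m (-9) = L \<and> m (-8) = int k + 1
    \<and> (\<forall>a. 0 \<le> a \<longrightarrow> a < A1 \<longrightarrow> m a = m0 a) \<and> (\<forall>i<n. m (A1 + int i) = dd i)
    \<and> (\<forall>K. 0 \<le> K \<longrightarrow> K \<le> int k \<longrightarrow> m (TB + K) = Wf 0 K)
    \<and> (\<forall>a. TB + int k + 1 \<le> a \<longrightarrow> m a = 0)"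

lemma p2a: assumes I: "I1 n m" shows "ht M BB 44 m 2 46 (I2 0)"
proof -
  have v: "m (-1) = 1" "m (-9) = Kmax" "bnd BB m" using I Kmax_eq unfolding I1_def vars_def by auto
  have b: "inb BB (Kmax + 1)" "inb BB 1" using inb_bd[OF bd_L] inb_bd[OF bd_1] by (auto simp: L_def)
  have z: "m TB = 0" using I unfolding I1_def by (simp add: TB_A1 nI_def)
  show ?thesis
    apply (insert v b)
    apply (rule ht_step, simp only: prog_nth, simp, simp, simp add: bnd_simps, simp, simp del: exec.simps add: exec_simps', (simp only: pcnorm)?)+
    apply (rule ht_done)
     apply (simp add: bnd_simps)
    using I z A1_pos nI_pos apply (auto simp: I2_def I1_def vars_def bnd_simps L_def TB_A1 nI_def)
    done
qed

lemma p2b: assumes k: "k < nat Kmax" and I: "I2 k m" shows "ht M BB 46 m 6 46 (I2 (Suc k))"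
proof -
  have v: "m (-1) = 1" "m (-3) = C + 1" "m (-9) = L" "m (-11) = TB" "m (-8) = int k + 1" "bnd BB m"
    using I unfolding I2_def vars_def by auto
  have kk: "int k + 1 \<le> Kmax" using k by linarith
  have c: "0 < L - (int k + 1)" using kk by (simp add: L_def)
  have TBp: "0 < TB" using nI_pos by (simp add: TB_def)
  have "bd 9 (int k + 1)" using bd_Kmax kk unfolding bd_def by simp
  then have bk: "bd 10 (int k + 1)" by (rule bd_mono) simp
  have b: "inb BB (L - (int k + 1))" "inb BB (TB + (int k + 1))" "inb BB (C + 1)" "inb BB (int k + 1 + 1)"
  proof -
    show "inb BB (L - (int k + 1))" by (rule inb_bd[OF bd_sub'[OF bd_L bk]]) auto
    show "inb BB (TB + (int k + 1))" by (rule inb_bd[OF bd_add'[OF bd_mono[OF bd_TB] bk]]) auto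
    show "inb BB (C + 1)" by (rule inb_bd[OF bd_add'[OF bd_C bd_1]]) auto
    show "inb BB (int k + 1 + 1)" by (rule inb_bd[OF bd_add'[OF bk bd_mono[OF bd_1]]]) auto
  qed
  have post: "I2 (Suc k) m'" if "bnd BB m'" "\<forall>a. 0 \<le> a \<longrightarrow> a \<noteq> TB + (int k + 1) \<longrightarrow> m' a = m a"
    "\<forall>a\<in>{-1,-15,-16,-30,-2,-3,-4,-5,-6,-7,-10,-11,-9}. m' a = m a"
    "m' (-8) = int k + 1 + 1" "m' (TB + (int k + 1)) = C + 1" for m'
  proof -
    have TA: "A1 < TB" using nI_pos by (simp add: TB_A1)
    have "vars m'" using I that unfolding I2_def vars_def by auto
    moreover have "\<forall>a. 0 \<le> a \<longrightarrow> a < A1 \<longrightarrow> m' a = m0 a" using I that(2) TA unfolding I2_def by auto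
    moreover have "\<forall>i<n. m' (A1 + int i) = dd i" using I that(2) TA A1_pos unfolding I2_def by (auto simp: TB_A1 nI_def)
    moreover have "\<forall>K. 0 \<le> K \<longrightarrow> K \<le> int (Suc k) \<longrightarrow> m' (TB + K) = Wf 0 K"
    proof (intro allI impI)
      fix K assume K: "0 \<le> K" "K \<le> int (Suc k)"
      show "m' (TB + K) = Wf 0 K"
      proof (cases "K = int k + 1")
        case True then show ?thesis using that(5) by simp
      next
        case False then show ?thesis using I that(2) K TBp unfolding I2_def by auto
      qed
    qed
    moreover have "\<forall>a. TB + int (Suc k) + 1 \<le> a \<longrightarrow> m' a = 0" using I that(2) TBp unfolding I2_def by auto
    ultimately show ?thesis using I that unfolding I2_def by auto
  qed
  show ?thesis
    apply (insert v b c TBp)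
    apply (rule ht_step, simp only: prog_nth, simp, simp, simp add: bnd_simps, simp, simp del: exec.simps add: exec_simps', (simp only: pcnorm)?)+
    apply (rule ht_done)
     apply (simp add: bnd_simps)
    apply (rule post)
    apply (auto simp: bnd_simps)
    done
qed

definition I3pre :: "(int \<Rightarrow> int) \<Rightarrow> bool" where
  "I3pre m \<longleftrightarrow> vars m \<and> bnd BB m \<and> m (-9) = L
    \<and> (\<forall>a. 0 \<le> a \<longrightarrow> a < A1 \<longrightarrow> m a = m0 a) \<and> (\<forall>i<n. m (A1 + int i) = dd i)
    \<and> (\<forall>K. 0 \<le> K \<longrightarrow> K < L \<longrightarrow> m (TB + K) = Wf 0 K)"

lemma p2x: assumes I: "I2 (nat Kmax) m" shows "ht M BB 46 m 3 53 I3pre"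
proof -
  have v: "m (-9) = L" "m (-8) = Kmax + 1" "bnd BB m" using I Kmax_nn unfolding I2_def vars_def by auto
  have c: "L - (Kmax + 1) = 0" by (simp add: L_def)
  have b: "inb BB 0" using inb_bd[OF bd_0] by simp
  show ?thesis
    apply (insert v b c)
    apply (rule ht_step, simp only: prog_nth, simp, simp, simp add: bnd_simps, simp, simp del: exec.simps add: exec_simps', (simp only: pcnorm)?)+
    apply (rule ht_done)
     apply (simp add: bnd_simps)
    using I Kmax_nn A1_pos nI_pos apply (auto simp: I3pre_def I2_def vars_def bnd_simps L_def TB_A1)
    done
qed

lemma phase2: assumes I: "I1 n m" shows "ht M BB 44 m (2 + 6 * nat Kmax + 3) 53 I3pre"
proof -
  have e: "2 + 6 * nat Kmax + 3 = 2 + (\<Sum>k\<in>{0..<nat Kmax}. 6) + 3" by simp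
  show ?thesis unfolding e
  proof (rule ht_trans[OF ht_trans[OF p2a[OF I]]])
    fix m1 assume "I2 0 m1"
    show "ht M BB 46 m1 (\<Sum>k\<in>{0..<nat Kmax}. 6) 46 (I2 (nat Kmax))"
      by (rule ht_loop[where I=I2]) (use p2b \<open>I2 0 m1\<close> in \<open>auto simp: I2_def\<close>)
  next
    fix m2 assume "I2 (nat Kmax) m2" then show "ht M BB 46 m2 3 53 I3pre" by (rule p2x)
  qed
qed

end


context pkp
begin

lemma Wf_bd: "j \<le> n \<Longrightarrow> bd 2 (Wf j K)"
proof -
  assume j: "j \<le> n"
  have "\<bar>Wf j K\<bar> \<le> C + 1" using Wf_nn[OF j] Wf_le[of j K] by simp
  also have "\<dots> \<le> N0" using nI_pos pmax_ge1 M1 by (simp add: N0_def)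
  also have "\<dots> = N0 ^ 1" by simp
  also have "\<dots> \<le> N0 ^ 2" using N0_ge by (intro power_increasing) auto
  finally show ?thesis by (simp add: bd_def)
qed

lemma TB_pos: "0 < TB" using nI_pos by (simp add: TB_def)
lemma A1_TB: "A1 + nI = TB" by (simp add: TB_A1)
lemma L_nn: "0 \<le> L" using L_pos by simp

lemma rowL_nn: "0 \<le> int r * L" using L_pos by simp

lemma addr_lt: "j' \<le> r \<Longrightarrow> K' < L \<Longrightarrow> 0 \<le> K \<Longrightarrow> int j' * L + K' < int r * L + L + K"
proof -
  assume a: "j' \<le> r" "K' < L" "0 \<le> K"
  have "int j' * L \<le> int r * L" using a(1) L_nn by (intro mult_right_mono) auto
  then show ?thesis using a by linarith
qed

lemma bd_rowaddr: "r \<le> n \<Longrightarrow> bd 11 (int r * L)"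
  by (rule bd_mult'[OF bd_j bd_L]) auto

definition I3 :: "nat \<Rightarrow> (int \<Rightarrow> int) \<Rightarrow> bool" where
  "I3 r m \<longleftrightarrow> vars m \<and> bnd BB m \<and> m (-9) = L \<and> m (-8) = int r + 1 \<and> m (-25) = TB + int r * L
    \<and> (\<forall>a. 0 \<le> a \<longrightarrow> a < A1 \<longrightarrow> m a = m0 a) \<and> (\<forall>i<n. m (A1 + int i) = dd i)
    \<and> (\<forall>j'\<le>r. \<forall>K. 0 \<le> K \<longrightarrow> K < L \<longrightarrow> m (TB + int j' * L + K) = Wf j' K)"

lemma p3a: assumes I: "I3pre m" shows "ht M BB 53 m 2 55 (I3 0)"
proof -
  have v: "m (-30) = 0" "m (-11) = TB" "bnd BB m" using I unfolding I3pre_def vars_def by auto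
  have b: "inb BB 1" "inb BB TB" using inb_bd[OF bd_1] inb_bd[OF bd_TB] by auto
  show ?thesis
    apply (insert v b)
    apply (rule ht_step, simp only: prog_nth, simp, simp, simp add: bnd_simps, simp, simp del: exec.simps add: exec_simps', (simp only: pcnorm)?)+
    apply (rule ht_done)
     apply (simp add: bnd_simps)
    using I TB_pos A1_pos apply (auto simp: I3pre_def I3_def vars_def bnd_simps)
    done
qed

definition I3i :: "nat \<Rightarrow> nat \<Rightarrow> (int \<Rightarrow> int) \<Rightarrow> bool" where
  "I3i r K m \<longleftrightarrow> vars m \<and> bnd BB m \<and> m (-9) = L \<and> m (-8) = int r + 1 \<and> m (-25) = TB + int r * L
    \<and> (\<forall>a. 0 \<le> a \<longrightarrow> a < A1 \<longrightarrow> m a = m0 a) \<and> (\<forall>i<n. m (A1 + int i) = dd i)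
    \<and> (\<forall>j'\<le>r. \<forall>K. 0 \<le> K \<longrightarrow> K < L \<longrightarrow> m (TB + int j' * L + K) = Wf j' K)
    \<and> m (-26) = dd r \<and> m (-27) = ws ! r \<and> m (-28) = int K
    \<and> (\<forall>K'. 0 \<le> K' \<longrightarrow> K' < int K \<longrightarrow> m (TB + int r * L + L + K') = Wf (Suc r) K')"

lemma p3b: assumes r: "r < n" and I: "I3 r m" shows "ht M BB 55 m 8 64 (I3i r 0)"
proof -
  have v: "m (-1) = 1" "m (-7) = nI + 1" "m (-10) = A1" "m (-8) = int r + 1" "bnd BB m"
    using I unfolding I3_def vars_def by auto
  have A: "0 < A1" by (rule A1_pos)
  have d: "m (A1 + int r) = dd r" using I r unfolding I3_def by auto
  have w: "m (int r + 1 + (int r + 1)) = ws ! r"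
  proof -
    have "int r + 1 + (int r + 1) < A1" using r by (simp add: A1_def nI_def)
    then have "m (int r + 1 + (int r + 1)) = m0 (int r + 1 + (int r + 1))" using I unfolding I3_def by auto
    moreover have "int r + 1 + (int r + 1) = 2 * int r + 2" by simp
    ultimately show ?thesis using m0_w[OF r] by simp
  qed
  have c: "0 < nI + 1 - (int r + 1)" using r by (simp add: nI_def)
  have rr: "r \<le> n" using r by simp
  have b: "inb BB (nI + 1 - (int r + 1))" "inb BB (A1 + (int r + 1))" "inb BB (A1 + (int r + 1) - 1)"
    "inb BB (dd r)" "inb BB (int r + 1 + (int r + 1))" "inb BB (ws ! r)" "inb BB 0"
  proof -
    have r1: "bd 2 (int r + 1)" by (rule bd_add'[OF bd_j[OF rr] bd_1]) auto
    show "inb BB (nI + 1 - (int r + 1))" by (rule inb_bd[OF bd_sub'[OF bd_add'[OF bd_nI bd_1] r1]]) auto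
    have a: "bd 4 (A1 + (int r + 1))" by (rule bd_add'[OF bd_A1 bd_mono[OF r1]]) auto
    show "inb BB (A1 + (int r + 1))" by (rule inb_bd[OF a]) auto
    show "inb BB (A1 + (int r + 1) - 1)" by (rule inb_bd[OF bd_sub'[OF a bd_mono[OF bd_1]]]) auto
    show "inb BB (dd r)" by (rule inb_bd[OF bd_dd[OF r]]) auto
    show "inb BB (int r + 1 + (int r + 1))" by (rule inb_bd[OF bd_add'[OF r1 r1]]) auto
    show "inb BB (ws ! r)" by (rule inb_bd[OF bd_w[OF r]]) auto
    show "inb BB 0" by (rule inb_bd[OF bd_0]) auto
  qed
  have post: "I3i r 0 m'" if "bnd BB m'" "\<forall>a. 0 \<le> a \<longrightarrow> m' a = m a"
    "\<forall>a\<in>{-1,-15,-16,-30,-2,-3,-4,-5,-6,-7,-10,-11,-8,-9,-25}. m' a = m a"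
    "m' (-26) = dd r" "m' (-27) = ws ! r" "m' (-28) = 0" for m'
  proof -
    have "vars m'" using I that unfolding I3_def vars_def by auto
    moreover have "\<forall>i<n. m' (A1 + int i) = dd i" using I that(2) A1_pos unfolding I3_def by auto
    moreover have "\<forall>j'\<le>r. \<forall>K. 0 \<le> K \<longrightarrow> K < L \<longrightarrow> m' (TB + int j' * L + K) = Wf j' K"
    proof (intro allI impI)
      fix j' K assume a: "j' \<le> r" "0 \<le> K" "K < L"
      have "0 \<le> TB + int j' * L + K" using TB_pos rowL_nn[of j'] a by linarith
      then show "m' (TB + int j' * L + K) = Wf j' K" using that(2) I a unfolding I3_def by auto
    qed
    ultimately show ?thesis using I that unfolding I3_def I3i_def by auto
  qed
  show ?thesis
    apply (insert v b c d w A)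
    apply (rule ht_step, simp only: prog_nth, simp, simp, simp add: bnd_simps, simp, simp del: exec.simps add: exec_simps', (simp only: pcnorm)?)+
    apply (rule ht_done)
     apply (simp add: bnd_simps)
    apply (rule post)
    apply (auto simp: bnd_simps)
    done
qed

lemma p3c: assumes r: "r < n" and K: "K < nat L" and I: "I3i r K m" shows "ht M BB 64 m 18 64 (I3i r (Suc K))"
proof -
  define rb where "rb = TB + int r * L"
  have rbp: "0 < rb" unfolding rb_def using rowL_nn[of r] TB_pos by linarith
  have v: "m (-1) = 1" "m (-9) = L" "m (-25) = rb" "m (-26) = dd r" "m (-27) = ws ! r"
    "m (-28) = int K" "m (-30) = 0" "bnd BB m"
    using I unfolding I3i_def vars_def rb_def by auto
  have KL: "int K < L" using K by linarith
  have rr: "r \<le> n" using r by simp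
  have a: "m (rb + int K) = Wf r (int K)" using I KL unfolding I3i_def rb_def by auto
  have c0: "0 < L - int K" using KL by simp
  have bK: "bd 10 (int K)" using bd_L KL unfolding bd_def by simp
  have ra: "bd 12 rb" unfolding rb_def by (rule bd_add'[OF bd_mono[OF bd_TB] bd_rowaddr[OF rr]]) auto
  have ad: "bd 13 (rb + int K)" by (rule bd_add'[OF ra bd_mono[OF bK]]) auto
  have bw: "bd 3 (Wf r (int K - dd r) + ws ! r)" by (rule bd_add'[OF Wf_bd[OF rr] bd_mono[OF bd_w[OF r]]]) auto
  have b: "inb BB (L - int K)" "inb BB (rb + int K)" "inb BB (Wf r (int K))"
    "inb BB (int K - dd r)" "inb BB (int K - dd r + 1)" "inb BB (rb + int K - dd r)"
    "inb BB (Wf r (int K - dd r))" "inb BB (Wf r (int K - dd r) + ws ! r)"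
    "inb BB (Wf r (int K) - (Wf r (int K - dd r) + ws ! r))"
    "inb BB (rb + L)" "inb BB (rb + L + int K)" "inb BB (int K + 1)"
  proof -
    show "inb BB (L - int K)" by (rule inb_bd[OF bd_sub'[OF bd_L bK]]) auto
    show "inb BB (rb + int K)" by (rule inb_bd[OF ad]) auto
    show "inb BB (Wf r (int K))" by (rule inb_bd[OF Wf_bd[OF rr]]) auto
    have kd: "bd 11 (int K - dd r)" by (rule bd_sub'[OF bK bd_mono[OF bd_dd[OF r]]]) auto
    show "inb BB (int K - dd r)" by (rule inb_bd[OF kd]) auto
    show "inb BB (int K - dd r + 1)" by (rule inb_bd[OF bd_add'[OF kd bd_mono[OF bd_1]]]) auto
    show "inb BB (rb + int K - dd r)" by (rule inb_bd[OF bd_sub'[OF ad bd_mono[OF bd_dd[OF r]]]]) auto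
    show "inb BB (Wf r (int K - dd r))" by (rule inb_bd[OF Wf_bd[OF rr]]) auto
    show "inb BB (Wf r (int K - dd r) + ws ! r)" by (rule inb_bd[OF bw]) auto
    show "inb BB (Wf r (int K) - (Wf r (int K - dd r) + ws ! r))" by (rule inb_bd[OF bd_sub'[OF bd_mono[OF Wf_bd[OF rr]] bw]]) auto
    have x: "bd 13 (rb + L)" by (rule bd_add'[OF ra bd_mono[OF bd_L]]) auto
    show "inb BB (rb + L)" by (rule inb_bd[OF x]) auto
    show "inb BB (rb + L + int K)" by (rule inb_bd[OF bd_add'[OF x bd_mono[OF bK]]]) auto
    show "inb BB (int K + 1)" by (rule inb_bd[OF bd_add'[OF bK bd_mono[OF bd_1]]]) auto
  qed
  have post: "I3i r (Suc K) m'" if "bnd BB m'" "\<forall>a. 0 \<le> a \<longrightarrow> a \<noteq> rb + L + int K \<longrightarrow> m' a = m a"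
    "\<forall>a\<in>{-1,-15,-16,-30,-2,-3,-4,-5,-6,-7,-10,-11,-8,-9,-25,-26,-27}. m' a = m a"
    "m' (-28) = int K + 1" "m' (rb + L + int K) = Wf (Suc r) (int K)" for m'
  proof -
    have nn: "0 \<le> int r * L" "0 < TB" using rowL_nn TB_pos by auto
    note that = that[unfolded rb_def]
    have X: "TB \<le> TB + int r * L + L + int K" using nn L_pos by linarith
    have TA: "A1 < TB" using nI_pos by (simp add: TB_A1)
    have "vars m'" using I that unfolding I3i_def vars_def by auto
    moreover have "\<forall>a. 0 \<le> a \<longrightarrow> a < A1 \<longrightarrow> m' a = m0 a" using I that(2) X TA unfolding I3i_def by auto
    moreover have "\<forall>i<n. m' (A1 + int i) = dd i"
    proof (intro allI impI)
      fix i assume i: "i < n"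
      have "A1 + int i < TB" using i by (simp add: TB_A1 nI_def)
      then show "m' (A1 + int i) = dd i" using that(2) I i A1_pos X unfolding I3i_def by auto
    qed
    moreover have "\<forall>j'\<le>r. \<forall>K. 0 \<le> K \<longrightarrow> K < L \<longrightarrow> m' (TB + int j' * L + K) = Wf j' K"
    proof (intro allI impI)
      fix j' K0 assume a: "j' \<le> r" "0 \<le> K0" "K0 < L"
      have "0 \<le> TB + int j' * L + K0" using TB_pos rowL_nn[of j'] a by linarith
      moreover have "TB + int j' * L + K0 \<noteq> TB + int r * L + L + int K" using addr_lt[OF a(1) a(3), of "int K"] by simp
      ultimately show "m' (TB + int j' * L + K0) = Wf j' K0" using that(2) I a unfolding I3i_def by auto
    qed
    moreover have "\<forall>K'. 0 \<le> K' \<longrightarrow> K' < int (Suc K) \<longrightarrow> m' (TB + int r * L + L + K') = Wf (Suc r) K'"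
    proof (intro allI impI)
      fix K' assume a: "0 \<le> K'" "K' < int (Suc K)"
      show "m' (TB + int r * L + L + K') = Wf (Suc r) K'"
      proof (cases "K' = int K")
        case True then show ?thesis using that(5) by simp
      next
        case False
        then have "K' < int K" using a by simp
        moreover have "0 \<le> TB + int r * L + L + K'" using nn L_pos a by linarith
        ultimately show ?thesis using that(2) I a False unfolding I3i_def by auto
      qed
    qed
    ultimately show ?thesis using I that unfolding I3i_def by auto
  qed
  show ?thesis
  proof (cases "dd r \<le> int K")
    case False
    then have c1: "\<not> 0 < int K - dd r + 1" by simp
    have val: "Wf (Suc r) (int K) = Wf r (int K)" using False by simp
    show ?thesis
      apply (rule ht_mono[where T=13 and Q="I3i r (Suc K)"])
        prefer 2 apply simp
       prefer 2 apply assumption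
      apply (insert v a c0 rbp b c1 val)
      apply (rule ht_step, simp only: prog_nth, simp, simp, simp add: bnd_simps, simp, simp del: exec.simps add: exec_simps', (simp only: pcnorm)?)+
      apply (rule ht_done)
       apply (simp add: bnd_simps)
      apply (rule post)
      apply (auto simp: bnd_simps)
      done
  next
    case True
    then have c1: "0 < int K - dd r + 1" by simp
    have a2: "m (rb + int K - dd r) = Wf r (int K - dd r)"
    proof -
      have "0 \<le> int K - dd r" "int K - dd r < L" using True KL dd_nn[of r] by auto
      then have "m (TB + int r * L + (int K - dd r)) = Wf r (int K - dd r)" using I unfolding I3i_def by auto
      then show ?thesis by (simp add: algebra_simps rb_def)
    qed
    show ?thesis
    proof (cases "0 < Wf r (int K) - (Wf r (int K - dd r) + ws ! r)")
      case True2: True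
      have val: "Wf (Suc r) (int K) = Wf r (int K - dd r) + ws ! r" using True True2 by simp
      show ?thesis
        apply (insert v a a2 c0 rbp b c1 val True2)
        apply (rule ht_step, simp only: prog_nth, simp, simp, simp add: bnd_simps, simp, simp del: exec.simps add: exec_simps', (simp only: pcnorm)?)+
        apply (rule ht_done)
         apply (simp add: bnd_simps)
        apply (rule post)
        apply (auto simp: bnd_simps)
        done
    next
      case False2: False
      have val: "Wf (Suc r) (int K) = Wf r (int K)" using True False2 by simp
      show ?thesis
        apply (insert v a a2 c0 rbp b c1 val False2)
        apply (rule ht_step, simp only: prog_nth, simp, simp, simp add: bnd_simps, simp, simp del: exec.simps add: exec_simps', (simp only: pcnorm)?)+
        apply (rule ht_done)
         apply (simp add: bnd_simps)
        apply (rule post)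
        apply (auto simp: bnd_simps)
        done
    qed
  qed
qed

end


context pkp
begin

lemma p3d: assumes r: "r < n" and I: "I3i r (nat L) m" shows "ht M BB 64 m 5 55 (I3 (Suc r))"
proof -
  define rb where "rb = TB + int r * L"
  have v: "m (-1) = 1" "m (-9) = L" "m (-25) = rb" "m (-28) = L" "m (-8) = int r + 1" "bnd BB m"
    using I L_pos unfolding I3i_def vars_def rb_def by auto
  have rr: "r \<le> n" using r by simp
  have b: "inb BB 0" "inb BB (rb + L)" "inb BB (int r + 1 + 1)"
  proof -
    show "inb BB 0" by (rule inb_bd[OF bd_0]) auto
    have ra: "bd 12 rb" unfolding rb_def by (rule bd_add'[OF bd_mono[OF bd_TB] bd_rowaddr[OF rr]]) auto
    show "inb BB (rb + L)" by (rule inb_bd[OF bd_add'[OF ra bd_mono[OF bd_L]]]) auto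
    have r1: "bd 2 (int r + 1)" by (rule bd_add'[OF bd_j[OF rr] bd_1]) auto
    show "inb BB (int r + 1 + 1)" by (rule inb_bd[OF bd_add'[OF r1 bd_mono[OF bd_1]]]) auto
  qed
  have post: "I3 (Suc r) m'" if "bnd BB m'" "\<forall>a. 0 \<le> a \<longrightarrow> m' a = m a"
    "\<forall>a\<in>{-1,-15,-16,-30,-2,-3,-4,-5,-6,-7,-10,-11,-9}. m' a = m a"
    "m' (-8) = int r + 1 + 1" "m' (-25) = rb + L" for m'
  proof -
    have "vars m'" using I that unfolding I3i_def vars_def by auto
    moreover have "\<forall>a. 0 \<le> a \<longrightarrow> a < A1 \<longrightarrow> m' a = m0 a" using I that(2) unfolding I3i_def by auto
    moreover have "\<forall>i<n. m' (A1 + int i) = dd i" using I that(2) A1_pos unfolding I3i_def by auto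
    moreover have "\<forall>j'\<le>Suc r. \<forall>K. 0 \<le> K \<longrightarrow> K < L \<longrightarrow> m' (TB + int j' * L + K) = Wf j' K"
    proof (intro allI impI)
      fix j' K assume a: "j' \<le> Suc r" "0 \<le> K" "K < L"
      have nn: "0 \<le> TB + int j' * L + K" using TB_pos rowL_nn[of j'] a by linarith
      show "m' (TB + int j' * L + K) = Wf j' K"
      proof (cases "j' = Suc r")
        case True
        have eq: "TB + int j' * L + K = TB + int r * L + L + K" using True by (simp add: algebra_simps)
        have "K < int (nat L)" using a L_pos by simp
        then have w: "m (TB + int r * L + L + K) = Wf (Suc r) K" using I a unfolding I3i_def by auto
        have "m' (TB + int j' * L + K) = m' (TB + int r * L + L + K)" by (simp only: eq)
        also have "\<dots> = m (TB + int r * L + L + K)" using that(2) nn eq by simp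
        also have "\<dots> = Wf (Suc r) K" by (rule w)
        finally show ?thesis using True by (simp only:)
      next
        case False
        then have "j' \<le> r" using a by simp
        then show ?thesis using I that(2) nn a unfolding I3i_def by auto
      qed
    qed
    moreover have "m' (-25) = TB + int (Suc r) * L" using that(5) by (simp add: rb_def algebra_simps)
    moreover have "m' (-8) = int (Suc r) + 1" using that(4) by simp
    ultimately show ?thesis using I that unfolding I3i_def I3_def by auto
  qed
  show ?thesis
    apply (insert v b)
    apply (rule ht_step, simp only: prog_nth, simp, simp, simp add: bnd_simps, simp, simp del: exec.simps add: exec_simps', (simp only: pcnorm)?)+
    apply (rule ht_done)
     apply (simp add: bnd_simps)
    apply (rule post)
    apply (auto simp: bnd_simps)
    done
qed

definition I4pre :: "(int \<Rightarrow> int) \<Rightarrow> bool" where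
  "I4pre m \<longleftrightarrow> vars m \<and> bnd BB m \<and> m (-9) = L \<and> m (-25) = TB + nI * L
    \<and> (\<forall>i<n. m (A1 + int i) = dd i)
    \<and> (\<forall>j'\<le>n. \<forall>K. 0 \<le> K \<longrightarrow> K < L \<longrightarrow> m (TB + int j' * L + K) = Wf j' K)"

lemma p3x: assumes I: "I3 n m" shows "ht M BB 55 m 3 87 I4pre"
proof -
  have v: "m (-7) = nI + 1" "m (-8) = nI + 1" "bnd BB m" using I unfolding I3_def vars_def by (auto simp: nI_def)
  have b: "inb BB (nI + 1 - (nI + 1))" using inb_bd[OF bd_0] by simp
  have post: "I4pre m'" if "bnd BB m'" "\<forall>a. 0 \<le> a \<longrightarrow> m' a = m a"
    "\<forall>a\<in>{-1,-15,-16,-30,-2,-3,-4,-5,-6,-7,-10,-11,-9,-25}. m' a = m a" for m'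
  proof -
    have "vars m'" using I that unfolding I3_def vars_def by auto
    moreover have "\<forall>i<n. m' (A1 + int i) = dd i" using I that(2) A1_pos unfolding I3_def by auto
    moreover have "\<forall>j'\<le>n. \<forall>K. 0 \<le> K \<longrightarrow> K < L \<longrightarrow> m' (TB + int j' * L + K) = Wf j' K"
    proof (intro allI impI)
      fix j' K assume a: "j' \<le> n" "0 \<le> K" "K < L"
      have nn: "0 \<le> TB + int j' * L + K" using TB_pos rowL_nn[of j'] a by linarith
      then show "m' (TB + int j' * L + K) = Wf j' K" using I that(2) a unfolding I3_def by auto
    qed
    ultimately show ?thesis using I that unfolding I3_def I4pre_def by (auto simp: nI_def)
  qed
  show ?thesis
    apply (insert v b)
    apply (rule ht_step, simp only: prog_nth, simp, simp, simp add: bnd_simps, simp, simp del: exec.simps add: exec_simps', (simp only: pcnorm)?)+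
    apply (rule ht_done)
     apply (simp add: bnd_simps)
    apply (rule post)
    apply (auto simp: bnd_simps)
    done
qed

lemma p3body: assumes r: "r < n" and I: "I3 r m" shows "ht M BB 55 m (8 + 18 * nat L + 5) 55 (I3 (Suc r))"
proof -
  have e: "8 + 18 * nat L + 5 = (8 + (\<Sum>k\<in>{0..<nat L}. 18)) + 5" by simp
  show ?thesis unfolding e
  proof (rule ht_trans[OF ht_trans[OF p3b[OF r I]]])
    fix m1 assume "I3i r 0 m1"
    show "ht M BB 64 m1 (\<Sum>k\<in>{0..<nat L}. 18) 64 (I3i r (nat L))"
      by (rule ht_loop[where I="I3i r"]) (use p3c[OF r] \<open>I3i r 0 m1\<close> in \<open>auto simp: I3i_def\<close>)
  next
    fix m2 assume "I3i r (nat L) m2"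
    then show "ht M BB 64 m2 5 55 (I3 (Suc r))" by (rule p3d[OF r])
  qed
qed

lemma phase3: assumes I: "I3pre m" shows "ht M BB 53 m (2 + n * (13 + 18 * nat L) + 3) 87 I4pre"
proof -
  have e: "2 + n * (13 + 18 * nat L) + 3 = (2 + (\<Sum>r\<in>{0..<n}. 8 + 18 * nat L + 5)) + 3" by simp
  show ?thesis unfolding e
  proof (rule ht_trans[OF ht_trans[OF p3a[OF I]]])
    fix m1 assume "I3 0 m1"
    show "ht M BB 55 m1 (\<Sum>r\<in>{0..<n}. 8 + 18 * nat L + 5) 55 (I3 n)"
      by (rule ht_loop[where I=I3]) (use p3body \<open>I3 0 m1\<close> in \<open>auto simp: I3_def\<close>)
  next
    fix m2 assume "I3 n m2" then show "ht M BB 55 m2 3 87 I4pre" by (rule p3x)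
  qed
qed

end


context pkp
begin

lemma bd_between: "0 \<le> x \<Longrightarrow> x \<le> y \<Longrightarrow> bd k y \<Longrightarrow> bd k x"
  unfolding bd_def by simp

lemma Kb_lt_L: "Kb < L" using Kb_props(3) by (simp add: L_def)

lemma I4pre_frame: assumes I: "I4pre m" and that: "bnd BB m'" "\<forall>a. 0 \<le> a \<longrightarrow> m' a = m a"
    "\<forall>a\<in>{-1,-15,-16,-30,-2,-3,-4,-5,-6,-7,-10,-11,-9,-25}. m' a = m a" shows "I4pre m'"
proof -
  have "vars m'" using I that unfolding I4pre_def vars_def by auto
  moreover have "\<forall>i<n. m' (A1 + int i) = dd i" using I that(2) A1_pos unfolding I4pre_def by auto
  moreover have "\<forall>j'\<le>n. \<forall>K. 0 \<le> K \<longrightarrow> K < L \<longrightarrow> m' (TB + int j' * L + K) = Wf j' K"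
  proof (intro allI impI)
    fix j' K assume a: "j' \<le> n" "0 \<le> K" "K < L"
    have nn: "0 \<le> TB + int j' * L + K" using TB_pos rowL_nn[of j'] a by linarith
    then show "m' (TB + int j' * L + K) = Wf j' K" using I that(2) a unfolding I4pre_def by auto
  qed
  ultimately show ?thesis using I that unfolding I4pre_def by auto
qed

definition I4 :: "nat \<Rightarrow> (int \<Rightarrow> int) \<Rightarrow> bool" where
  "I4 i m \<longleftrightarrow> I4pre m \<and> m (-28) = Kmax - int i"

lemma p4a: assumes I: "I4pre m" shows "ht M BB 87 m 1 88 (I4 0)"
proof -
  have v: "m (-9) = L" "m (-1) = 1" "bnd BB m" using I unfolding I4pre_def vars_def by auto
  have "L - 1 = Kmax" by (simp add: L_def)
  then have b: "inb BB (L - 1)" using inb_bd[OF bd_Kmax] by simp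
  show ?thesis
    apply (insert v b)
    apply (rule ht_step, simp only: prog_nth, simp, simp, simp add: bnd_simps, simp, simp del: exec.simps add: exec_simps', (simp only: pcnorm)?)+
    apply (rule ht_done)
     apply (simp add: bnd_simps)
    apply (simp add: I4_def)
    apply (rule conjI)
     apply (rule I4pre_frame[OF I])
       apply (auto simp: bnd_simps L_def)
    done
qed

lemma mod_facts: assumes "0 \<le> K" shows
  "K - K div (nI + 1) * (nI + 1) = K mod (nI + 1)"
  "0 \<le> K div (nI + 1)" "K div (nI + 1) \<le> K" "0 \<le> K div (nI + 1) * (nI + 1)" "K div (nI + 1) * (nI + 1) \<le> K"
  "0 \<le> K mod (nI + 1)" "K mod (nI + 1) \<le> K"
proof -
  have d: "0 < nI + 1" using nI_pos by simp
  show "K - K div (nI + 1) * (nI + 1) = K mod (nI + 1)" by (simp add: minus_div_mult_eq_mod)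
  show "0 \<le> K div (nI + 1)" using assms d by (simp add: pos_imp_zdiv_nonneg_iff)
  have "K div (nI + 1) \<le> K div 1" using assms d nI_pos by (intro zdiv_mono2) auto
  then show "K div (nI + 1) \<le> K" by simp
  show "0 \<le> K div (nI + 1) * (nI + 1)" using assms d by (simp add: pos_imp_zdiv_nonneg_iff)
  have "K div (nI + 1) * (nI + 1) + K mod (nI + 1) = K" by (rule div_mult_mod_eq)
  moreover have "0 \<le> K mod (nI + 1)" using d by simp
  ultimately show "K div (nI + 1) * (nI + 1) \<le> K" by linarith
  show "0 \<le> K mod (nI + 1)" using d by simp
  show "K mod (nI + 1) \<le> K" using assms d by (simp add: zmod_le_nonneg_dividend)
qed

lemma mod2_facts: fixes x :: int assumes "0 \<le> x" shows
  "x - x div 2 * 2 = x mod 2" "0 \<le> x div 2" "x div 2 \<le> x" "0 \<le> x div 2 * 2" "x div 2 * 2 \<le> x" "0 \<le> x mod 2" "x mod 2 \<le> x"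
proof -
  show "x - x div 2 * 2 = x mod 2" by (simp add: minus_div_mult_eq_mod)
  show "0 \<le> x div 2" using assms by simp
  show "x div 2 \<le> x" using assms by simp
  show "0 \<le> x div 2 * 2" using assms by simp
  have "x div 2 * 2 + x mod 2 = x" by (rule div_mult_mod_eq)
  moreover have "0 \<le> x mod 2" by simp
  ultimately show "x div 2 * 2 \<le> x" by linarith
  show "0 \<le> x mod 2" by simp
  show "x mod 2 \<le> x" using assms by (simp add: zmod_le_nonneg_dividend)
qed

lemma p4b: assumes i: "i < nat (Kmax - Kb)" and I: "I4 i m" shows "ht M BB 88 m 13 88 (I4 (Suc i))"
proof -
  define K where "K = Kmax - int i"
  define rb where "rb = TB + nI * L"
  have v: "m (-1) = 1" "m (-3) = C + 1" "m (-7) = nI + 1" "m (-15) = 2" "m (-25) = rb" "m (-28) = K" "bnd BB m"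
    using I unfolding I4_def I4pre_def vars_def K_def rb_def by auto
  have K0: "Kb < K" "K \<le> Kmax" using i by (auto simp: K_def)
  have Kn: "0 \<le> K" "K < L" using K0 Kb_props(2) by (auto simp: L_def)
  have ng: "\<not> good K" using Kb_props(4)[of K] K0 Kn by auto
  have rbp: "0 < rb" unfolding rb_def using rowL_nn[of n] TB_pos by (simp add: nI_def)
  have a: "m (rb + K) = Wf n K" using I Kn unfolding I4_def I4pre_def rb_def by (auto simp: nI_def)
  have bK: "bd 9 K" using bd_Kmax Kn K0 unfolding bd_def by simp
  have ra: "bd 12 rb" unfolding rb_def using bd_rowaddr[of n] by (intro bd_add'[OF bd_mono[OF bd_TB]]) (auto simp: nI_def)
  note mf = mod_facts[OF Kn(1)]
  note mf2 = mod2_facts[OF mf(6)]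
  have b: "inb BB (rb + K)" "inb BB (Wf n K)" "inb BB (C + 1 - Wf n K)" "inb BB (K div (nI + 1))"
    "inb BB (K div (nI + 1) * (nI + 1))" "inb BB (K - K div (nI + 1) * (nI + 1))"
    "inb BB ((K - K div (nI + 1) * (nI + 1)) div 2)" "inb BB ((K - K div (nI + 1) * (nI + 1)) div 2 * 2)"
    "inb BB ((K - K div (nI + 1) * (nI + 1)) - (K - K div (nI + 1) * (nI + 1)) div 2 * 2)" "inb BB (K - 1)"
  proof -
    show "inb BB (rb + K)" by (rule inb_bd[OF bd_add'[OF ra bd_mono[OF bK]]]) auto
    show "inb BB (Wf n K)" by (rule inb_bd[OF Wf_bd]) auto
    show "inb BB (C + 1 - Wf n K)" by (rule inb_bd[OF bd_sub'[OF bd_add'[OF bd_C bd_1] Wf_bd]]) auto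
    show "inb BB (K div (nI + 1))" by (rule inb_bd[OF bd_between[OF mf(2,3) bK]]) auto
    show "inb BB (K div (nI + 1) * (nI + 1))" by (rule inb_bd[OF bd_between[OF mf(4,5) bK]]) auto
    show "inb BB (K - K div (nI + 1) * (nI + 1))" unfolding mf(1) by (rule inb_bd[OF bd_between[OF mf(6,7) bK]]) auto
    have bm: "bd 9 (K mod (nI + 1))" by (rule bd_between[OF mf(6,7) bK])
    show "inb BB ((K - K div (nI + 1) * (nI + 1)) div 2)" unfolding mf(1) by (rule inb_bd[OF bd_between[OF mf2(2,3) bm]]) auto
    show "inb BB ((K - K div (nI + 1) * (nI + 1)) div 2 * 2)" unfolding mf(1) by (rule inb_bd[OF bd_between[OF mf2(4,5) bm]]) auto
    show "inb BB ((K - K div (nI + 1) * (nI + 1)) - (K - K div (nI + 1) * (nI + 1)) div 2 * 2)"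
      unfolding mf(1) mf2(1) by (rule inb_bd[OF bd_between[OF mf2(6,7) bm]]) auto
    show "inb BB (K - 1)" by (rule inb_bd[OF bd_sub'[OF bK bd_mono[OF bd_1]]]) auto
  qed
  have post: "I4 (Suc i) m'" if "bnd BB m'" "\<forall>a. 0 \<le> a \<longrightarrow> m' a = m a"
    "\<forall>a\<in>{-1,-15,-16,-30,-2,-3,-4,-5,-6,-7,-10,-11,-9,-25}. m' a = m a" "m' (-28) = K - 1" for m'
  proof -
    have "I4pre m'" using I4pre_frame I that unfolding I4_def by blast
    then show ?thesis using that(4) unfolding I4_def K_def by simp
  qed
  show ?thesis
  proof (cases "Wf n K \<le> C")
    case False
    then have c: "\<not> 0 < C + 1 - Wf n K" by simp
    show ?thesis
      apply (rule ht_mono[where T=7 and Q="I4 (Suc i)"])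
        prefer 2 apply simp
       prefer 2 apply assumption
      apply (insert v a rbp b c Kn(1))
      apply (rule ht_step, simp only: prog_nth, simp, simp, simp add: bnd_simps, simp, simp del: exec.simps add: exec_simps', (simp only: pcnorm)?)+
      apply (rule ht_done)
       apply (simp add: bnd_simps)
      apply (rule post)
      apply (auto simp: bnd_simps)
      done
  next
    case True
    then have c: "0 < C + 1 - Wf n K" by simp
    have odd: "odd (K mod (nI + 1))" using ng True by (simp add: good_def)
    have c2: "0 < (K - K div (nI + 1) * (nI + 1)) - (K - K div (nI + 1) * (nI + 1)) div 2 * 2"
      unfolding mf(1) mf2(1) using odd by (simp add: odd_iff_mod_2_eq_one)
    show ?thesis
      apply (insert v a rbp b c c2 Kn(1))
      apply (rule ht_step, simp only: prog_nth, simp, simp, simp add: bnd_simps, simp, simp del: exec.simps add: exec_simps', (simp only: pcnorm)?)+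
      apply (rule ht_done)
       apply (simp add: bnd_simps)
      apply (rule post)
      apply (auto simp: bnd_simps)
      done
  qed
qed

end


context pkp
begin

definition I5pre :: "(int \<Rightarrow> int) \<Rightarrow> bool" where
  "I5pre m \<longleftrightarrow> I4pre m \<and> m (-28) = Kb"

lemma p4x: assumes I: "I4 (nat (Kmax - Kb)) m" shows "ht M BB 88 m 12 103 I5pre"
proof -
  define K where "K = Kb"
  define rb where "rb = TB + nI * L"
  have KK: "Kmax - int (nat (Kmax - Kb)) = K" using Kb_props(3) by (simp add: K_def)
  have v: "m (-1) = 1" "m (-3) = C + 1" "m (-7) = nI + 1" "m (-15) = 2" "m (-25) = rb" "m (-28) = K" "bnd BB m"
    using I KK unfolding I4_def I4pre_def vars_def rb_def by auto
  have Kn: "0 \<le> K" "K < L" using Kb_props(2) Kb_lt_L by (auto simp: K_def)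
  have gd: "good K" using Kb_props(1) by (simp add: K_def)
  have rbp: "0 < rb" unfolding rb_def using rowL_nn[of n] TB_pos by (simp add: nI_def)
  have a: "m (rb + K) = Wf n K" using I Kn unfolding I4_def I4pre_def rb_def by (auto simp: nI_def)
  have bK: "bd 9 K" using bd_Kmax Kn Kb_props(3) unfolding bd_def K_def by simp
  have ra: "bd 12 rb" unfolding rb_def using bd_rowaddr[of n] by (intro bd_add'[OF bd_mono[OF bd_TB]]) (auto simp: nI_def)
  note mf = mod_facts[OF Kn(1)]
  note mf2 = mod2_facts[OF mf(6)]
  have b: "inb BB (rb + K)" "inb BB (Wf n K)" "inb BB (C + 1 - Wf n K)" "inb BB (K div (nI + 1))"
    "inb BB (K div (nI + 1) * (nI + 1))" "inb BB (K - K div (nI + 1) * (nI + 1))"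
    "inb BB ((K - K div (nI + 1) * (nI + 1)) div 2)" "inb BB ((K - K div (nI + 1) * (nI + 1)) div 2 * 2)"
    "inb BB ((K - K div (nI + 1) * (nI + 1)) - (K - K div (nI + 1) * (nI + 1)) div 2 * 2)"
  proof -
    show "inb BB (rb + K)" by (rule inb_bd[OF bd_add'[OF ra bd_mono[OF bK]]]) auto
    show "inb BB (Wf n K)" by (rule inb_bd[OF Wf_bd]) auto
    show "inb BB (C + 1 - Wf n K)" by (rule inb_bd[OF bd_sub'[OF bd_add'[OF bd_C bd_1] Wf_bd]]) auto
    show "inb BB (K div (nI + 1))" by (rule inb_bd[OF bd_between[OF mf(2,3) bK]]) auto
    show "inb BB (K div (nI + 1) * (nI + 1))" by (rule inb_bd[OF bd_between[OF mf(4,5) bK]]) auto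
    show "inb BB (K - K div (nI + 1) * (nI + 1))" unfolding mf(1) by (rule inb_bd[OF bd_between[OF mf(6,7) bK]]) auto
    have bm: "bd 9 (K mod (nI + 1))" by (rule bd_between[OF mf(6,7) bK])
    show "inb BB ((K - K div (nI + 1) * (nI + 1)) div 2)" unfolding mf(1) by (rule inb_bd[OF bd_between[OF mf2(2,3) bm]]) auto
    show "inb BB ((K - K div (nI + 1) * (nI + 1)) div 2 * 2)" unfolding mf(1) by (rule inb_bd[OF bd_between[OF mf2(4,5) bm]]) auto
    show "inb BB ((K - K div (nI + 1) * (nI + 1)) - (K - K div (nI + 1) * (nI + 1)) div 2 * 2)"
      unfolding mf(1) mf2(1) by (rule inb_bd[OF bd_between[OF mf2(6,7) bm]]) auto
  qed
  have c: "0 < C + 1 - Wf n K" using gd by (simp add: good_def)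
  have c2: "\<not> 0 < (K - K div (nI + 1) * (nI + 1)) - (K - K div (nI + 1) * (nI + 1)) div 2 * 2"
    unfolding mf(1) mf2(1) using gd by (simp add: good_def even_iff_mod_2_eq_zero)
  have post: "I5pre m'" if "bnd BB m'" "\<forall>a. 0 \<le> a \<longrightarrow> m' a = m a"
    "\<forall>a\<in>{-1,-15,-16,-30,-2,-3,-4,-5,-6,-7,-10,-11,-9,-25,-28}. m' a = m a" for m'
  proof -
    have "I4pre m'" using I4pre_frame I that unfolding I4_def by auto
    then show ?thesis using that v unfolding I5pre_def K_def by auto
  qed
  show ?thesis
    apply (insert v a rbp b c c2 Kn(1))
    apply (rule ht_step, simp only: prog_nth, simp, simp, simp add: bnd_simps, simp, simp del: exec.simps add: exec_simps', (simp only: pcnorm)?)+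
    apply (rule ht_done)
     apply (simp add: bnd_simps)
    apply (rule post)
    apply (auto simp: bnd_simps)
    done
qed

lemma phase4: assumes I: "I4pre m" shows "ht M BB 87 m (1 + 13 * nat (Kmax - Kb) + 12) 103 I5pre"
proof -
  have e: "1 + 13 * nat (Kmax - Kb) + 12 = (1 + (\<Sum>k\<in>{0..<nat (Kmax - Kb)}. 13)) + 12" by simp
  show ?thesis unfolding e
  proof (rule ht_trans[OF ht_trans[OF p4a[OF I]]])
    fix m1 assume "I4 0 m1"
    show "ht M BB 88 m1 (\<Sum>k\<in>{0..<nat (Kmax - Kb)}. 13) 88 (I4 (nat (Kmax - Kb)))"
      by (rule ht_loop[where I=I4]) (use p4b \<open>I4 0 m1\<close> in \<open>auto simp: I4_def I4pre_def\<close>)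
  next
    fix m2 assume "I4 (nat (Kmax - Kb)) m2" then show "ht M BB 88 m2 12 103 I5pre" by (rule p4x)
  qed
qed

end


context pkp
begin

lemma BT_sub: "BT j K \<subseteq> {..<j}"
proof (induction j arbitrary: K)
  case 0 then show ?case by simp
next
  case (Suc j)
  have "BT (Suc j) K \<subseteq> insert j (BT j (K - dd j)) \<union> BT j K" by (simp only: BT.simps) auto
  then show ?case using Suc.IH[of K] Suc.IH[of "K - dd j"] by auto
qed


definition I5 :: "nat \<Rightarrow> (int \<Rightarrow> int) \<Rightarrow> bool" where
  "I5 i m \<longleftrightarrow> m (-1) = 1 \<and> m (-30) = 0 \<and> m (-9) = L \<and> m (-10) = A1 \<and> bnd BB m
    \<and> (\<forall>i<n. m (A1 + int i) = dd i)
    \<and> (\<forall>j'\<le>n. \<forall>K. 0 \<le> K \<longrightarrow> K < L \<longrightarrow> m (TB + int j' * L + K) = Wf j' K)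
    \<and> m (-8) = int (n - i) \<and> m (-25) = TB + int (n - i) * L
    \<and> 0 \<le> m (-28) \<and> m (-28) < L \<and> Wf (n - i) (m (-28)) \<le> C \<and> Sel \<inter> {..<n - i} = BT (n - i) (m (-28))
    \<and> (\<forall>a. int (n - i) \<le> a \<longrightarrow> a < nI \<longrightarrow> m a = (if nat a \<in> Sel then 1 else 0))"

lemma I5_tab: "I5 i m \<Longrightarrow> j \<le> n \<Longrightarrow> 0 \<le> K \<Longrightarrow> K < L \<Longrightarrow> m (TB + int j * L + K) = Wf j K"
  unfolding I5_def by blast

lemma p5a: assumes I: "I5pre m" shows "ht M BB 103 m 1 104 (I5 0)"
proof -
  have v: "m (-2) = nI" "m (-30) = 0" "bnd BB m" using I unfolding I5pre_def I4pre_def vars_def by auto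
  have b: "inb BB nI" by (rule inb_bd[OF bd_nI]) auto
  have post: "I5 0 m'" if "bnd BB m'" "\<forall>a. a \<noteq> -8 \<longrightarrow> m' a = m a" "m' (-8) = nI" for m'
  proof -
    have W: "Wf n Kb \<le> C" using Kb_props(1) by (simp add: good_def)
    have S: "Sel \<inter> {..<n} = BT n Kb" using Sel_props(1) by (auto simp: Sel_def)
    have "\<forall>j'\<le>n. \<forall>K. 0 \<le> K \<longrightarrow> K < L \<longrightarrow> m' (TB + int j' * L + K) = Wf j' K"
    proof (intro allI impI)
      fix j' K assume a: "j' \<le> n" "0 \<le> K" "K < L"
      have nn: "0 \<le> TB + int j' * L + K" using TB_pos rowL_nn[of j'] a by linarith
      then show "m' (TB + int j' * L + K) = Wf j' K" using I that(2) a unfolding I5pre_def I4pre_def by auto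
    qed
    moreover have "\<forall>i<n. m' (A1 + int i) = dd i" using I that(2) A1_pos unfolding I5pre_def I4pre_def by auto
    ultimately show ?thesis using I that W S Kb_props(2) Kb_lt_L unfolding I5_def I5pre_def I4pre_def vars_def
      by (auto simp: nI_def)
  qed
  show ?thesis
    apply (insert v b)
    apply (rule ht_step, simp only: prog_nth, simp, simp, simp add: bnd_simps, simp, simp del: exec.simps add: exec_simps', (simp only: pcnorm)?)+
    apply (rule ht_done)
     apply (simp add: bnd_simps)
    apply (rule post)
    apply (auto simp: bnd_simps)
    done
qed

lemma p5b: assumes i: "i < n" and I: "I5 i m" shows "ht M BB 104 m 14 104 (I5 (Suc i))"
proof -
  define j' where "j' = n - Suc i"
  have jj: "n - i = Suc j'" using i by (simp add: j'_def)
  define K where "K = m (-28)"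
  define rb where "rb = TB + int (Suc j') * L"
  have v: "m (-1) = 1" "m (-30) = 0" "m (-9) = L" "m (-10) = A1" "m (-8) = int j' + 1" "m (-25) = rb" "m (-28) = K" "bnd BB m"
    using I jj unfolding I5_def K_def rb_def by auto
  have j'n: "j' < n" using i by (simp add: j'_def)
  have Kn: "0 \<le> K" "K < L" "Wf (Suc j') K \<le> C" and S: "Sel \<inter> {..<Suc j'} = BT (Suc j') K"
    using I jj unfolding I5_def K_def by auto
  have rbL: "rb - L = TB + int j' * L" by (simp add: rb_def algebra_simps)
  have rbp: "0 < rb - L" using rbL TB_pos rowL_nn[of j'] by linarith
  have Lp: "0 < L" using L_pos by simp
  have a1: "m (rb + K) = Wf (Suc j') K" unfolding rb_def by (rule I5_tab[OF I]) (use Kn j'n in auto)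
  have a2: "m (rb - L + K) = Wf j' K" unfolding rbL by (rule I5_tab[OF I]) (use Kn j'n in auto)
  have a3: "m (A1 + (int j' + 1 - 1)) = dd j'" using I j'n unfolding I5_def by auto
  have Ap: "0 < A1" by (rule A1_pos)
  have jA: "int j' < A1" using j'n by (simp add: A1_def nI_def)
  have bK: "bd 10 K" using bd_L Kn unfolding bd_def by simp
  have ra: "bd 12 rb" unfolding rb_def using bd_rowaddr[of "Suc j'"] j'n by (intro bd_add'[OF bd_mono[OF bd_TB]]) auto
  have b: "inb BB (rb + K)" "inb BB (Wf (Suc j') K)" "inb BB (rb - L)" "inb BB (rb - L + K)" "inb BB (Wf j' K)"
    "inb BB (Wf j' K - Wf (Suc j') K)" "inb BB (int j' + 1 - 1)" "inb BB 1" "inb BB 0"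
    "inb BB (A1 + (int j' + 1 - 1))" "inb BB (dd j')" "inb BB (K - dd j')"
  proof -
    show "inb BB (rb + K)" by (rule inb_bd[OF bd_add'[OF ra bd_mono[OF bK]]]) auto
    show "inb BB (Wf (Suc j') K)" by (rule inb_bd[OF Wf_bd]) (use j'n in auto)
    have rl: "bd 13 (rb - L)" by (rule bd_sub'[OF ra bd_mono[OF bd_L]]) auto
    show "inb BB (rb - L)" by (rule inb_bd[OF rl]) auto
    show "inb BB (rb - L + K)" by (rule inb_bd[OF bd_add'[OF rl bd_mono[OF bK]]]) auto
    show "inb BB (Wf j' K)" by (rule inb_bd[OF Wf_bd]) (use j'n in auto)
    show "inb BB (Wf j' K - Wf (Suc j') K)" by (rule inb_bd[OF bd_sub'[OF Wf_bd Wf_bd]]) (use j'n in auto)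
    show "inb BB (int j' + 1 - 1)" using inb_bd[OF bd_j[of j']] j'n by simp
    show "inb BB 1" "inb BB 0" using inb_bd[OF bd_1] inb_bd[OF bd_0] by auto
    show "inb BB (A1 + (int j' + 1 - 1))" using inb_bd[OF bd_add'[OF bd_A1 bd_mono[OF bd_j[of j']]], of 4] j'n by simp
    show "inb BB (dd j')" by (rule inb_bd[OF bd_dd[OF j'n]]) auto
    show "inb BB (K - dd j')" by (rule inb_bd[OF bd_sub'[OF bK bd_mono[OF bd_dd[OF j'n]]]]) auto
  qed
  have post: "I5 (Suc i) m'" if "bnd BB m'" "\<forall>a. a \<noteq> int j' \<longrightarrow> 0 \<le> a \<longrightarrow> m' a = m a"
    "\<forall>a\<in>{-1,-30,-9,-10}. m' a = m a" "m' (-8) = int j'" "m' (-25) = rb - L"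
    "0 \<le> m' (-28)" "m' (-28) < L" "Wf j' (m' (-28)) \<le> C" "Sel \<inter> {..<j'} = BT j' (m' (-28))"
    "m' (int j') = (if j' \<in> Sel then 1 else 0)" for m'
  proof -
    have nj: "n - Suc i = j'" by (simp add: j'_def)
    have "\<forall>j'\<le>n. \<forall>K. 0 \<le> K \<longrightarrow> K < L \<longrightarrow> m' (TB + int j' * L + K) = Wf j' K"
    proof (intro allI impI)
      fix j'' K assume a: "j'' \<le> n" "0 \<le> K" "K < L"
      have nn: "0 \<le> TB + int j'' * L + K" using TB_pos rowL_nn[of j''] a by linarith
      have ne: "TB + int j'' * L + K \<noteq> int j'" using nn jA TB_A1 nI_pos rowL_nn[of j''] a by linarith
      show "m' (TB + int j'' * L + K) = Wf j'' K" using I that(2) a nn ne unfolding I5_def by auto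
    qed
    moreover have "\<forall>i<n. m' (A1 + int i) = dd i"
    proof (intro allI impI)
      fix i' assume "i' < n"
      moreover have "A1 + int i' \<noteq> int j'" using jA by linarith
      ultimately show "m' (A1 + int i') = dd i'" using I that(2) A1_pos unfolding I5_def by auto
    qed
    moreover have "\<forall>a. int j' \<le> a \<longrightarrow> a < nI \<longrightarrow> m' a = (if nat a \<in> Sel then 1 else 0)"
    proof (intro allI impI)
      fix a assume a: "int j' \<le> a" "a < nI"
      show "m' a = (if nat a \<in> Sel then 1 else 0)"
      proof (cases "a = int j'")
        case True then show ?thesis using that(10) by simp
      next
        case False
        then have "int (n - i) \<le> a" using a jj by simp
        then show ?thesis using I that(2) a False unfolding I5_def by auto
      qed
    qed
    moreover have "rb - L = TB + int j' * L" by (rule rbL)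
    ultimately show ?thesis using I that unfolding I5_def nj by auto
  qed
  have "j' \<in> Sel \<longleftrightarrow> j' \<in> Sel \<inter> {..<Suc j'}" by simp
  then have Sj: "j' \<in> Sel \<longleftrightarrow> j' \<in> BT (Suc j') K" by (simp only: S)
  have "Sel \<inter> {..<j'} = (Sel \<inter> {..<Suc j'}) \<inter> {..<j'}" by auto
  then have Ssub: "Sel \<inter> {..<j'} = BT (Suc j') K \<inter> {..<j'}" by (simp only: S)
  show ?thesis
  proof (cases "Wf (Suc j') K < Wf j' K")
    case True
    have c: "0 < Wf j' K - Wf (Suc j') K" using True by simp
    have dK: "dd j' \<le> K" and eq: "Wf (Suc j') K = Wf j' (K - dd j') + ws ! j'"
      using True by (auto split: if_splits simp: min_def)
    have wj: "0 \<le> ws ! j'" using w_nn j'n by simp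
    have BTe: "BT (Suc j') K = insert j' (BT j' (K - dd j'))" using True by simp
    have in1: "j' \<in> Sel" using Sj BTe by simp
    have S2: "Sel \<inter> {..<j'} = BT j' (K - dd j')" using Ssub BTe BT_sub[of j' "K - dd j'"] by auto
    have W2: "Wf j' (K - dd j') \<le> C" using eq Kn(3) wj by linarith
    have K2: "0 \<le> K - dd j'" "K - dd j' < L" using dK Kn dd_nn[of j'] by auto
    have c': "Wf j' (K - dd j') + ws ! j' < Wf j' K" using True eq by simp
    show ?thesis
      apply (insert v a1 a2 a3 rbp Ap jA b c' in1 S2 W2 K2 Lp Kn(1) dK)
      apply (rule ht_step, simp only: prog_nth, simp, simp, simp add: bnd_simps, simp, simp del: exec.simps add: exec_simps', (simp only: pcnorm)?)+
      apply (rule ht_done)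
       apply (simp add: bnd_simps)
      apply (rule post)
      apply (auto simp: bnd_simps)
      done
  next
    case False
    have c: "\<not> 0 < Wf j' K - Wf (Suc j') K" using False by simp
    have BTe: "BT (Suc j') K = BT j' K" using False by simp
    have in1: "j' \<notin> Sel" using Sj BTe BT_sub[of j' K] by auto
    have S2: "Sel \<inter> {..<j'} = BT j' K" using Ssub BTe BT_sub[of j' K] by auto
    have W2: "Wf j' K \<le> C" using False Kn(3) by simp
    have eqF: "Wf (Suc j') K = Wf j' K" using False Wf_Suc_le[of j' K] by linarith
    have a1f: "m (rb + K) = Wf j' K" using a1 eqF by simp
    show ?thesis
      apply (rule ht_mono[where T=11 and Q="I5 (Suc i)"])
        prefer 2 apply simp
       prefer 2 apply assumption
      apply (insert v a1f a2 a3 rbp Ap jA b in1 S2 W2 Kn Lp)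
      apply (rule ht_step, simp only: prog_nth, simp, simp, simp add: bnd_simps, simp, simp del: exec.simps add: exec_simps', (simp only: pcnorm)?)+
      apply (rule ht_done)
       apply (simp add: bnd_simps)
      apply (rule post)
      apply (auto simp: bnd_simps)
      done
  qed
qed

definition Fin :: "(int \<Rightarrow> int) \<Rightarrow> bool" where
  "Fin m \<longleftrightarrow> bnd BB m \<and> (\<forall>a. 0 \<le> a \<longrightarrow> a < nI \<longrightarrow> m a = (if nat a \<in> Sel then 1 else 0))"

lemma p5x: assumes I: "I5 n m" shows "ht M BB 104 m 2 121 Fin"
proof -
  have v: "m (-8) = 0" "bnd BB m" using I unfolding I5_def by auto
  show ?thesis
    apply (insert v)
    apply (rule ht_step, simp only: prog_nth, simp, simp, simp add: bnd_simps, simp, simp del: exec.simps add: exec_simps', (simp only: pcnorm)?)+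
    apply (rule ht_done)
     apply (simp add: bnd_simps)
    using I apply (auto simp: Fin_def I5_def)
    done
qed

lemma phase5: assumes I: "I5pre m" shows "ht M BB 103 m (1 + 14 * n + 2) 121 Fin"
proof -
  have e: "1 + 14 * n + 2 = (1 + (\<Sum>k\<in>{0..<n}. 14)) + 2" by simp
  show ?thesis unfolding e
  proof (rule ht_trans[OF ht_trans[OF p5a[OF I]]])
    fix m1 assume "I5 0 m1"
    show "ht M BB 104 m1 (\<Sum>k\<in>{0..<n}. 14) 104 (I5 n)"
      by (rule ht_loop[where I=I5]) (use p5b \<open>I5 0 m1\<close> in \<open>auto simp: I5_def\<close>)
  next
    fix m2 assume "I5 n m2" then show "ht M BB 104 m2 2 121 Fin" by (rule p5x)
  qed
qed

end


context pkp
begin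

definition "Ttot = 15 + (T1 + 3) + (2 + 6 * nat Kmax + 3) + (2 + n * (13 + 18 * nat L) + 3)
   + (1 + 13 * nat (Kmax - Kb) + 12) + (1 + 14 * n + 2)"

lemma whole: "ht M BB 0 m0 Ttot 121 Fin"
  unfolding Ttot_def
  apply (rule ht_trans[OF ht_trans[OF ht_trans[OF ht_trans[OF ht_trans[OF phase0]]]]])
  apply (erule phase1)
  apply (erule phase2)
  apply (erule phase3)
  apply (erule phase4)
  apply (erule phase5)
  done

lemma init_eq: "init ws ps C = (0, m0)" by (simp add: m0_def init_def)

lemma main_run: "\<exists>t. t \<le> Ttot \<and> halted (prog M) (run (prog M) t (init ws ps C))
   \<and> (\<forall>t'\<le>t. bnd BB (snd (run (prog M) t' (init ws ps C))))
   \<and> ram_output n (run (prog M) t (init ws ps C)) = Sel"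
proof -
  obtain m' where r: "reach (prog M) BB (0, m0) Ttot (121, m')" and F: "Fin m'"
    using whole unfolding ht_def by blast
  obtain t where t: "t \<le> Ttot" "run (prog M) t (0, m0) = (121, m')" "\<forall>t'\<le>t. bnd BB (snd (run (prog M) t' (0, m0)))"
    using r unfolding reach_def by blast
  have h: "halted (prog M) (121, m')" unfolding halted_def by (simp add: prog_nth)
  have o: "ram_output n (121, m') = Sel"
  proof -
    have "\<And>j. j < n \<Longrightarrow> m' (int j) \<noteq> 0 \<longleftrightarrow> j \<in> Sel" using F unfolding Fin_def by (auto simp: nI_def)
    moreover have "Sel \<subseteq> {..<n}" by (rule Sel_props(1))
    ultimately show ?thesis unfolding ram_output_def by auto
  qed
  show ?thesis using t h o unfolding init_eq by auto
qed

definition "Lam = max 1 (log 2 (real_of_int (pmax ps)))"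

lemma Lam_ge1: "1 \<le> Lam" by (simp add: Lam_def)

lemma vf_Lam: "j < n \<Longrightarrow> real (vf (ps ! j)) \<le> 3 * real_of_int mm * Lam"
proof -
  assume j: "j < n"
  have p: "ps ! j \<noteq> 0" using p_nz[OF j] .
  have "log 2 (real_of_int \<bar>ps ! j\<bar>) \<le> log 2 (real_of_int (pmax ps))"
    using p pmax_ge[OF j] by (intro log_mono) auto
  also have "\<dots> \<le> Lam" by (simp add: Lam_def)
  finally have "2 + log 2 (real_of_int \<bar>ps ! j\<bar>) \<le> 3 * Lam" using Lam_ge1 by linarith
  then have "real_of_int mm * (2 + log 2 (real_of_int \<bar>ps ! j\<bar>)) \<le> real_of_int mm * (3 * Lam)"
    using mm_ge3 by (intro mult_left_mono) auto
  then show ?thesis using vf_real_bound[OF p] by simp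
qed

lemma time_bound: "real Ttot \<le> 953 * real n ^ 4 * real_of_int M * Lam"
proof -
  define x where "x = real n"
  define Mr where "Mr = real_of_int M"
  define P2 where "P2 = x ^ 2 * Mr * Lam"
  define Q where "Q = x * P2"
  have x1: "1 \<le> x" using n_pos by (simp add: x_def)
  have M1': "1 \<le> Mr" using M1 by (simp add: Mr_def)
  have L1: "1 \<le> Lam" by (rule Lam_ge1)
  have mmr: "real_of_int mm = 3 * x * Mr" by (simp add: mm_def nI_def x_def Mr_def)
  have xx: "1 \<le> x ^ 2" using x1 by (simp add: one_le_power)
  have P21: "x ^ 2 \<le> P2"
  proof -
    have "x ^ 2 * 1 * 1 \<le> x ^ 2 * Mr * Lam" using M1' L1 xx by (intro mult_mono) auto
    then show ?thesis by (simp add: P2_def)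
  qed
  have P2_1: "1 \<le> P2" using P21 xx by linarith
  have "x ^ 1 \<le> x ^ 2" by (rule power_increasing) (use x1 in auto)
  then have xP: "x \<le> P2" using P21 by simp
  have Q1: "P2 \<le> Q" unfolding Q_def using x1 P2_1 by (simp add: mult_le_cancel_right1)
  have xQ: "x \<le> Q" "x ^ 2 \<le> Q" "1 \<le> Q" using xP Q1 P21 P2_1 by linarith+
  define V where "V = (\<Sum>j<n. real (vf (ps ! j)))"
  have V: "V \<le> 9 * P2"
  proof -
    have "V \<le> (\<Sum>j<n. 3 * real_of_int mm * Lam)" unfolding V_def using vf_Lam by (intro sum_mono) auto
    also have "\<dots> = x * (9 * (x * Mr * Lam))" by (simp add: mmr x_def)
    also have "\<dots> = 9 * P2" by (simp add: power2_eq_square P2_def)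
    finally show ?thesis .
  qed
  have V0: "0 \<le> V" unfolding V_def by (simp add: sum_nonneg)
  have Kmr: "real_of_int Kmax \<le> (x + 1) * (V + x) + x"
  proof -
    have "real_of_int Kmax = (\<Sum>j<n. real_of_int (dd j))" by (simp add: Kmax_def)
    also have "\<dots> \<le> (\<Sum>j<n. (x + 1) * (real (vf (ps ! j)) + 1) + 1)"
      by (intro sum_mono) (auto simp: dd_def neg_def x_def nI_def)
    also have "\<dots> = (x + 1) * (V + x) + x" by (simp add: sum.distrib sum_distrib_left V_def x_def algebra_simps)
    finally show ?thesis .
  qed
  have K21: "real_of_int Kmax \<le> 21 * Q"
  proof -
    have "(x + 1) * (V + x) \<le> (2 * x) * (9 * P2 + x)" using x1 V V0 by (intro mult_mono) auto
    also have "\<dots> = 18 * Q + 2 * x ^ 2" by (simp add: algebra_simps power2_eq_square Q_def)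
    finally show ?thesis using Kmr xQ by linarith
  qed
  have K0: "0 \<le> Kmax" by (rule Kmax_nn)
  have T1r: "real T1 = 24 * x + 7 * V" by (simp add: T1_def V_def x_def sum.distrib sum_distrib_left of_nat_sum)
  have nK: "real (nat Kmax) = real_of_int Kmax" using K0 by simp
  have nL: "real (nat L) = real_of_int Kmax + 1" using K0 by (simp add: L_def)
  have nKb: "real (nat (Kmax - Kb)) \<le> real_of_int Kmax" using Kb_props(2,3) by simp
  have "real Ttot = 44 + real T1 + 6 * real (nat Kmax) + x * (13 + 18 * real (nat L)) + 13 * real (nat (Kmax - Kb)) + 14 * x"
    by (simp add: Ttot_def x_def)
  also have "\<dots> \<le> 44 + (24 * x + 7 * V) + 6 * real_of_int Kmax + x * (13 + 18 * (real_of_int Kmax + 1)) + 13 * real_of_int Kmax + 14 * x"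
    using T1r nK nL nKb by simp
  also have "\<dots> = 44 + 69 * x + 7 * V + 19 * real_of_int Kmax + 18 * (x * real_of_int Kmax)" by (simp add: algebra_simps)
  also have "\<dots> \<le> 44 * Q + 69 * Q + 63 * Q + 399 * Q + 18 * (x * (21 * Q))"
  proof -
    have "x * real_of_int Kmax \<le> x * (21 * Q)" using K21 x1 by (intro mult_left_mono) auto
    moreover have "V \<le> 9 * Q" using V Q1 by linarith
    ultimately show ?thesis using xQ K21 by linarith
  qed
  also have "\<dots> = 575 * Q + 378 * (x * Q)" by (simp add: algebra_simps)
  also have "\<dots> \<le> 953 * (x * Q)"
  proof -
    have "Q \<le> x * Q" using x1 xQ by (simp add: mult_le_cancel_right1)
    then show ?thesis by linarith
  qed
  also have "x * Q = real n ^ 4 * real_of_int M * Lam" by (simp add: Q_def P2_def x_def Mr_def power_numeral_reduce algebra_simps)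
  finally show ?thesis by (simp add: algebra_simps)
qed

end

theorem theorem2:
  shows "\<exists>(c::real) (K::nat). c > 0 \<and>
    (\<forall>eps::real. 0 < eps \<and> eps < 1 \<longrightarrow>
       (\<exists>P. approx_alg_within K eps
              (\<lambda>ws ps C. c * (real (length ws) ^ 4 / eps) * max 1 (log 2 (real_of_int (pmax ps))))
              P))"
proof (rule exI[of _ 2000], rule exI[of _ 20], intro conjI allI impI)
  show "(0::real) < 2000" by simp
  fix eps :: real assume e: "0 < eps \<and> eps < 1"
  define M where "M = \<lceil>1 / eps\<rceil>"
  have ie: "1 < 1 / eps" using e by (simp add: field_simps)
  have Mge: "1 / eps \<le> real_of_int M" unfolding M_def by (rule le_of_int_ceiling)
  have M1: "1 \<le> M" using ie Mge by linarith
  have Mle: "real_of_int M \<le> 2 / eps"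
  proof -
    have "real_of_int M \<le> 1 / eps + 1" unfolding M_def by (rule of_int_ceiling_le_add_one)
    then show ?thesis using ie by (simp add: field_simps)
  qed
  have invM: "1 / real_of_int M \<le> eps"
  proof -
    have "0 < real_of_int M" using M1 by simp
    then show ?thesis using Mge e by (simp add: field_simps)
  qed
  show "\<exists>P. approx_alg_within 20 eps
              (\<lambda>ws ps C. 2000 * (real (length ws) ^ 4 / eps) * max 1 (log 2 (real_of_int (pmax ps)))) P"
  proof (rule exI[of _ "prog M"], unfold approx_alg_within_def, intro allI impI)
    fix ws ps C assume inst: "pkp_instance ws ps C"
    interpret pkp ws ps C M using inst M1 by unfold_locales
    obtain t where t: "t \<le> Ttot" "halted (prog M) (run (prog M) t (init ws ps C))"
      "\<forall>t'\<le>t. bnd BB (snd (run (prog M) t' (init ws ps C)))"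
      "ram_output (length ws) (run (prog M) t (init ws ps C)) = Sel"
      using main_run by blast
    have time: "real t \<le> 2000 * (real (length ws) ^ 4 / eps) * max 1 (log 2 (real_of_int (pmax ps)))"
    proof -
      have "real t \<le> real Ttot" using t(1) by simp
      also have "\<dots> \<le> 953 * real (length ws) ^ 4 * real_of_int M * Lam" by (rule time_bound)
      also have "\<dots> \<le> 953 * real (length ws) ^ 4 * (2 / eps) * Lam"
        using Mle Lam_ge1 by (intro mult_right_mono mult_left_mono) auto
      also have "\<dots> = 1906 * (real (length ws) ^ 4 / eps) * Lam" by simp
      also have "\<dots> \<le> 2000 * (real (length ws) ^ 4 / eps) * Lam"
        using Lam_ge1 e by (intro mult_right_mono) auto
      finally show ?thesis by (simp add: Lam_def)
    qed
    have wb: "word_bounded 20 eps ws ps C (prog M) t"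
      unfolding word_bounded_def
    proof (intro allI impI)
      fix t' a assume "t' \<le> t"
      then have "bnd BB (snd (run (prog M) t' (init ws ps C)))" using t(3) by simp
      moreover have "BB = (2 + int (length ws) + C + pmax ps + \<lceil>1 / eps\<rceil>) ^ 20"
        unfolding BB_def N0_def nI_def by (simp add: M_def)
      ultimately show "\<bar>snd (run (prog M) t' (init ws ps C)) a\<bar> \<le> (2 + int (length ws) + C + pmax ps + \<lceil>1 / eps\<rceil>) ^ 20"
        unfolding bnd_def by metis
    qed
    have ap: "(1 - eps) * opt ws ps C \<le> obj ps Sel"
    proof -
      have "(1 - eps) * opt ws ps C \<le> (1 - 1 / real_of_int M) * opt ws ps C"
        using invM opt_ge1 by (intro mult_right_mono) auto
      also have "\<dots> \<le> obj ps Sel" by (rule Sel_approx)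
      finally show ?thesis .
    qed
    show "\<exists>t. real t \<le> 2000 * (real (length ws) ^ 4 / eps) * max 1 (log 2 (real_of_int (pmax ps))) \<and>
             halted (prog M) (run (prog M) t (init ws ps C)) \<and>
             word_bounded 20 eps ws ps C (prog M) t \<and>
             (let S = ram_output (length ws) (run (prog M) t (init ws ps C)) in
                feasible ws C S \<and> obj ps S \<ge> (1 - eps) * opt ws ps C)"
      using time t(2) wb t(4) Sel_feasible ap by (intro exI[of _ t]) auto
  qed
qed


end
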